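(* Let $p\in(\frac12,1]$ and let $\theta=\frac{1+\sqrt{2p-1}}{2}$. There exists $\varepsilon_0=\varepsilon_0(p)>0$ such that the following holds for every fixed $0<\varepsilon<\varepsilon_0$. Let $q=q(n)\gg\frac{\log n}{n}$, and let $G=G_n$ be $n$-vertex graphs satisfying \[\left|e(G[U])-q\frac{|U|^2}{2}\right|\leq\frac{\varepsilon^2}{4}qn^2\quad\text{for all }U\subseteq V(G).\] Consider a fixed tripartition $V(G)=V_1\sqcup V_2\sqcup V_3$. Then for every $\mu\in\mathcal{M}_{1,p}(G)$, the following hold with probability $1-o(1)$ as $n\to\infty$: (P1) $e(\mathbf{G}_\mu[V_i])\geq pq\frac{|V_i|^2}{2}-\varepsilon qn^2$ for every $i\in[3]$; (P2) $e(\mathbf{G}_\mu[V_i,V_j])\geq pq|V_i||V_j|-\varepsilon qn^2$ for all $1\leq i<j\leq3$; (P3) for every $i\in[3]$ with $|V_i|\geq\varepsilon^{1/4}n$, $\mathbf{G}_\mu[V_i]$ contains a unique largest connected component $C_i$, of order at least $(\theta-\varepsilon^{1/4})|V_i|$; (P4) for all $1\leq i<j\leq3$ with $|V_i|,|V_j|\geq\varepsilon^{1/4}n$, there exists a path from $C_i$ to $C_j$ in $\mathbf{G}_\mu[V_i,V_j]$; (P5) there is a unique largest connected component $C$ in $\mathbf{G}_\mu$ such that $|C|\geq(\theta-3\varepsilon^{1/4})n$ and $C_i\subseteq C$ for each $i\in[3]$ with $|V_i|\geq\varepsilon^{1/4}n$.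
   Context: $G[U]$ is the induced subgraph on $U$, and for disjoint $X,Y$, $G[X,Y]$ is the bipartite subgraph with vertex set $X\cup Y$ and the edges of $G$ between $X$ and $Y$. A random graph model on $G$ is a probability measure $\mu$ on subsets of $E(G)$, and $\mathbf{G}_\mu$ is the random spanning subgraph with edge set distributed according to $\mu$. $\mu$ is $1$-independent if for all sets $A,B\subseteq E(G)$ whose edges span disjoint vertex sets, $E(\mathbf{G}_\mu)\cap A$ and $E(\mathbf{G}_\mu)\cap B$ are independent. $\mathcal{M}_{1,p}(G)$ is the set of $1$-independent measures on $G$ in which each edge is present with probability exactly $p$. *)

theory Defs
  imports "HOL-Probability.Probability" "HOL-Library.Landau_Symbols"
begin

definition edges_on :: "nat set \<Rightarrow> nat set set" where
  "edges_on S = {e. \<exists>u v. e = {u, v} \<and> u \<noteq> v \<and> u \<in> S \<and> v \<in> S}"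

definition e_ind :: "nat set set \<Rightarrow> nat set \<Rightarrow> nat" where
  "e_ind F U = card {e \<in> F. e \<subseteq> U}"

definition bip_edges :: "nat set set \<Rightarrow> nat set \<Rightarrow> nat set \<Rightarrow> nat set set" where
  "bip_edges F X Y = {e \<in> F. \<exists>x\<in>X. \<exists>y\<in>Y. e = {x, y}}"

definition e_bip :: "nat set set \<Rightarrow> nat set \<Rightarrow> nat set \<Rightarrow> nat" where
  "e_bip F X Y = card (bip_edges F X Y)"

definition reach :: "nat set set \<Rightarrow> nat set \<Rightarrow> nat \<Rightarrow> nat \<Rightarrow> bool" where
  "reach F U = (\<lambda>x y. x \<in> U \<and> y \<in> U \<and> {x, y} \<in> F)\<^sup>*\<^sup>*"

definition comp :: "nat set set \<Rightarrow> nat set \<Rightarrow> nat \<Rightarrow> nat set" where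
  "comp F U v = {w \<in> U. reach F U v w}"

definition components :: "nat set set \<Rightarrow> nat set \<Rightarrow> nat set set" where
  "components F U = comp F U ` U"

definition unique_largest_comp :: "nat set set \<Rightarrow> nat set \<Rightarrow> nat set \<Rightarrow> bool" where
  "unique_largest_comp F U C \<longleftrightarrow>
     C \<in> components F U \<and> (\<forall>D \<in> components F U. D \<noteq> C \<longrightarrow> card D < card C)"

definition one_indep :: "nat set set \<Rightarrow> nat set set pmf \<Rightarrow> bool" where
  "one_indep E \<mu> \<longleftrightarrow>
     (\<forall>A B. A \<subseteq> E \<longrightarrow> B \<subseteq> E \<longrightarrow> \<Union>A \<inter> \<Union>B = {} \<longrightarrow>
        (\<forall>\<S> \<T>. measure_pmf.prob \<mu> {X. X \<inter> A \<in> \<S> \<and> X \<inter> B \<in> \<T>} =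
                 measure_pmf.prob \<mu> {X. X \<inter> A \<in> \<S>} * measure_pmf.prob \<mu> {X. X \<inter> B \<in> \<T>}))"

definition M1p :: "nat set set \<Rightarrow> real \<Rightarrow> nat set set pmf set" where
  "M1p E p = {\<mu>. set_pmf \<mu> \<subseteq> Pow E \<and> one_indep E \<mu> \<and>
                  (\<forall>e \<in> E. measure_pmf.prob \<mu> {X. e \<in> X} = p)}"

end

theory Submission
  imports Defs
begin

lemma reach_sym: "reach F U x y \<Longrightarrow> reach F U y x"
  unfolding reach_def
  by (rule sympD[OF symp_rtranclp]) (auto intro: sympI simp: insert_commute)

lemma reach_trans: "reach F U x y \<Longrightarrow> reach F U y z \<Longrightarrow> reach F U x z"
  unfolding reach_def by (rule rtranclp_trans)

lemma reach_refl: "reach F U x x"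
  unfolding reach_def by simp

lemma reach_mono: "F \<subseteq> F' \<Longrightarrow> U \<subseteq> U' \<Longrightarrow> reach F U x y \<Longrightarrow> reach F' U' x y"
  unfolding reach_def
  by (erule rtranclp_mono[THEN predicate2D, rotated]) auto

lemma reach_in: "reach F U x y \<Longrightarrow> x \<in> U \<Longrightarrow> y \<in> U"
  unfolding reach_def by (induction rule: rtranclp_induct) auto

definition closed_in_g :: "nat set set \<Rightarrow> nat set \<Rightarrow> nat set \<Rightarrow> bool" where
  "closed_in_g X V S \<longleftrightarrow> S \<subseteq> V \<and> (\<forall>u w. u \<in> S \<longrightarrow> w \<in> V \<longrightarrow> {u, w} \<in> X \<longrightarrow> w \<in> S)"

lemma closed_reach: "reach X V x y \<Longrightarrow> closed_in_g X V S \<Longrightarrow> x \<in> S \<Longrightarrow> y \<in> S"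
  unfolding reach_def
  by (induction rule: rtranclp_induct) (auto simp: closed_in_g_def)

lemma comp_closed: "closed_in_g X V (comp X V v)"
  unfolding closed_in_g_def comp_def
  using reach_trans[of X V v] by (auto simp: reach_def)

lemma closed_Un: "closed_in_g X V S \<Longrightarrow> closed_in_g X V T \<Longrightarrow> closed_in_g X V (S \<union> T)"
  unfolding closed_in_g_def by blast

lemma closed_sub: "closed_in_g X V T \<Longrightarrow> T \<subseteq> V' \<Longrightarrow> V' \<subseteq> V \<Longrightarrow> closed_in_g X V' T"
  unfolding closed_in_g_def by blast

lemma closed_split:
  assumes "closed_in_g X V S" "finite X" "\<forall>e\<in>X. \<exists>u w. e = {u, w}"
  shows "e_ind X V \<le> e_ind X S + e_ind X (V - S)"
proof -
  have "{e \<in> X. e \<subseteq> V} \<subseteq> {e \<in> X. e \<subseteq> S} \<union> {e \<in> X. e \<subseteq> V - S}"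
  proof
    fix e assume e: "e \<in> {e \<in> X. e \<subseteq> V}"
    then obtain u w where uw: "e = {u, w}" using assms(3) by blast
    have "{w, u} \<in> X" using e uw by (simp add: insert_commute)
    then show "e \<in> {e \<in> X. e \<subseteq> S} \<union> {e \<in> X. e \<subseteq> V - S}"
      using e uw assms(1) unfolding closed_in_g_def by blast
  qed
  then have "card {e \<in> X. e \<subseteq> V} \<le> card ({e \<in> X. e \<subseteq> S} \<union> {e \<in> X. e \<subseteq> V - S})"
    by (rule card_mono[rotated]) (use assms(2) in auto)
  also have "\<dots> \<le> card {e \<in> X. e \<subseteq> S} + card {e \<in> X. e \<subseteq> V - S}" by (rule card_Un_le)
  finally show ?thesis unfolding e_ind_def .
qed

lemma comp_eq: "reach X V v z \<Longrightarrow> reach X V w z \<Longrightarrow> comp X V v = comp X V w"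
  unfolding comp_def using reach_trans reach_sym by blast

lemma comp_disj: "comp X V v \<noteq> comp X V w \<Longrightarrow> comp X V v \<inter> comp X V w = {}"
  using comp_eq unfolding comp_def by blast

lemma ulc:
  assumes "v \<in> U" "finite U" "2 * card (comp X U v) > card U"
  shows "unique_largest_comp X U (comp X U v)"
  unfolding unique_largest_comp_def components_def
proof (intro conjI ballI impI)
  show "comp X U v \<in> comp X U ` U" using assms by auto
  fix D assume D: "D \<in> comp X U ` U" "D \<noteq> comp X U v"
  then obtain w where w: "D = comp X U w" by auto
  have "D \<subseteq> U - comp X U v" using comp_disj[of X U w v] D w by (auto simp: comp_def)
  then have "card D \<le> card (U - comp X U v)" using assms(2) by (intro card_mono) auto
  also have "\<dots> = card U - card (comp X U v)"
    by (rule card_Diff_subset) (use assms(2) in \<open>auto simp: comp_def intro: finite_subset\<close>)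
  finally show "card D < card (comp X U v)" using assms(3) by linarith
qed


lemma eps_bounds:
  fixes \<delta> n m :: real
  assumes "\<delta> > 0" "\<delta> * n \<le> m" "n \<ge> 0"
  shows "\<delta>^4 * n^2 \<le> \<delta>^2 * m^2" "(\<delta>^4)^2 * n^2 \<le> \<delta>^6 * m^2"
proof -
  have "(\<delta> * n)^2 \<le> m^2" using assms by (intro power_mono) auto
  then have h: "\<delta>^2 * n^2 \<le> m^2" by (simp add: power_mult_distrib)
  show "\<delta>^4 * n^2 \<le> \<delta>^2 * m^2"
    using mult_left_mono[OF h, of "\<delta>^2"] assms by (simp add: power_add[symmetric] mult.assoc[symmetric])
  show "(\<delta>^4)^2 * n^2 \<le> \<delta>^6 * m^2"
    using mult_left_mono[OF h, of "\<delta>^6"] assms by (simp add: power_add[symmetric] power_mult[symmetric] mult.assoc[symmetric])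
qed

lemma arith3:
  fixes P N4 Q N8 M D2 D6 S :: real
  shows "P/2 - N4 \<le> Q/2 + 3*(N8/4) \<Longrightarrow> Q \<le> M/2 \<Longrightarrow> N4 \<le> D2 \<Longrightarrow> N8 \<le> D6 \<Longrightarrow> 2*P = M + S \<Longrightarrow> S \<le> 4*D2 + 3*D6"
  by linarith

lemma p3_det:
  fixes X E :: "nat set set" and V :: "nat set" and q p \<delta> s :: real and n :: nat
  assumes XE: "X \<subseteq> E" and finE: "finite E" and Epairs: "\<forall>e\<in>E. \<exists>u w. e = {u, w}"
    and quasi: "\<forall>U \<subseteq> V. real (e_ind E U) \<le> q * real (card U)^2 / 2 + (\<delta>^4)^2 / 4 * q * real n^2"
    and finV: "finite V" and big: "real (card V) \<ge> \<delta> * real n" and n: "n > 0"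
    and d: "\<delta> > 0" "100 * \<delta> \<le> s" "\<delta> \<le> 1" and s: "s^2 = 2*p - 1" "s \<ge> 0" and q: "q > 0"
    and p1: "real (e_ind X V) \<ge> p * q * real (card V)^2 / 2 - \<delta>^4 * q * real n^2"
  shows "\<exists>v\<in>V. unique_largest_comp X V (comp X V v) \<and>
            real (card (comp X V v)) \<ge> ((1 + s)/2 - \<delta>) * real (card V)"
proof -
  define m where "m = card V"
  define \<eta> where "\<eta> = (\<delta>^4)^2 / 4 * q * real n^2"
  have mpos: "real m > 0" using big n d unfolding m_def
    by (smt (verit) of_nat_0_less_iff mult_pos_pos)
  have finX: "finite X" using XE finE by (rule finite_subset)
  have Xpairs: "\<forall>e\<in>X. \<exists>u w. e = {u, w}" using XE Epairs by blast
  have eXE: "e_ind X S \<le> e_ind E S" for S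
    unfolding e_ind_def using XE finE by (intro card_mono) auto
  have qS: "S \<subseteq> V \<Longrightarrow> real (e_ind X S) \<le> q * real (card S)^2 / 2 + \<eta>" for S
    using quasi eXE[of S] unfolding \<eta>_def by (smt (verit) of_nat_mono)
  have e1: "\<delta>^4 * real n^2 \<le> \<delta>^2 * real m^2" and e2: "(\<delta>^4)^2 * real n^2 \<le> \<delta>^6 * real m^2"
    using eps_bounds[OF d(1), of "real n" "real m"] big unfolding m_def by auto
  have cV: "card (comp X V v) \<le> m" for v
    unfolding m_def comp_def using finV by (intro card_mono) auto
  show ?thesis
  proof (cases "\<exists>v\<in>V. 2 * card (comp X V v) \<ge> m")
    case True
    then obtain v where v: "v \<in> V" "2 * card (comp X V v) \<ge> m" by blast
    define L where "L = comp X V v"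
    define l where "l = card L"
    have lm: "l \<le> m" using cV unfolding l_def L_def by auto
    have "e_ind X V \<le> e_ind X L + e_ind X (V - L)"
      using closed_split[OF comp_closed finX Xpairs] unfolding L_def by blast
    moreover have "card (V - L) = m - l" unfolding m_def l_def L_def comp_def
      using finV by (subst card_Diff_subset) (auto intro: finite_subset)
    ultimately have "real (e_ind X V) \<le> q * real l^2/2 + \<eta> + (q * real (m - l)^2/2 + \<eta>)"
      using qS[of L] qS[of "V - L"] unfolding l_def L_def comp_def by (smt (verit) of_nat_add of_nat_mono Diff_subset mem_Collect_eq subsetI)
    then have "q * (p * real m^2 / 2 - \<delta>^4 * real n^2) \<le> q * (real l^2/2 + (real m - real l)^2/2 + (\<delta>^4)^2 / 2 * real n^2)"
      using p1 lm unfolding \<eta>_def m_def by (simp add: of_nat_diff algebra_simps)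
    then have i: "p * real m^2 / 2 - \<delta>^4 * real n^2 \<le> real l^2/2 + (real m - real l)^2/2 + (\<delta>^4)^2 / 2 * real n^2"
      using q by simp
    define y where "y = 2 * real l - real m"
    have y0: "y \<ge> 0" using v(2) unfolding y_def l_def L_def by simp
    have sq: "real l^2 + (real m - real l)^2 = (real m^2 + y^2)/2"
      unfolding y_def by (simp add: power2_eq_square algebra_simps)
    have pm: "2 * p * real m^2 = real m^2 + s^2 * real m^2" using s(1) by (simp add: left_diff_distrib)
    have iii: "y^2 \<ge> (s^2 - 4*\<delta>^2 - 2*\<delta>^6) * real m^2"
      unfolding left_diff_distrib using i e1 e2 sq pm by (simp add: mult.assoc)
    have iv: "(s - 2*\<delta>)^2 \<le> s^2 - 4*\<delta>^2 - 2*\<delta>^6"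
    proof -
      have "\<delta>^6 \<le> \<delta>^2" using d by (intro power_decreasing) auto
      moreover have "100*(\<delta>*\<delta>) \<le> s*\<delta>" using mult_right_mono[OF d(2), of \<delta>] d by (simp add: mult.assoc)
      moreover have "\<delta>*\<delta> \<ge> 0" by simp
      ultimately have "8*\<delta>^2 + 2*\<delta>^6 \<le> 4 * (s * \<delta>)" using d
        unfolding power2_eq_square by linarith
      then show ?thesis by (simp add: power2_eq_square algebra_simps)
    qed
    have "((s - 2*\<delta>) * real m)^2 \<le> y^2"
      using iii mult_right_mono[OF iv, of "real m^2"] by (simp add: power_mult_distrib)
    then have "(s - 2*\<delta>) * real m \<le> y"
      using y0 by (rule power2_le_imp_le)
    then have "real l \<ge> ((1 + s)/2 - \<delta>) * real m" unfolding y_def by (simp add: algebra_simps)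
    moreover have "((1 + s)/2 - \<delta>) * real m > real m / 2" using d mpos
      by (simp add: algebra_simps)
    ultimately have "real (2 * card L) > real (card V)" unfolding l_def m_def by simp
    then have "2 * card L > card V" by linarith
    then have "unique_largest_comp X V L" unfolding L_def by (rule ulc[OF v(1) finV])
    then show ?thesis using \<open>real l \<ge> _\<close> v(1) unfolding L_def l_def m_def by blast
  next
    case False
    then have small: "\<forall>v\<in>V. 2 * card (comp X V v) < m" by auto
    define SS where "SS = {S. closed_in_g X V S \<and> 2 * card S \<le> m}"
    have "SS \<subseteq> Pow V" unfolding SS_def closed_in_g_def by auto
    then have finSS: "finite SS" using finV by (meson finite_Pow_iff finite_subset)
    have "{} \<in> SS" unfolding SS_def closed_in_g_def by auto
    then have "card ` SS \<noteq> {}" by auto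
    then have "Max (card ` SS) \<in> card ` SS" using finSS by (intro Max_in) auto
    then obtain S where S: "S \<in> SS" "card S = Max (card ` SS)" by auto
    have Smax: "S' \<in> SS \<Longrightarrow> card S' \<le> card S" for S' using finSS S by simp
    have Sc: "closed_in_g X V S" "2 * card S \<le> m" using S unfolding SS_def by auto
    then have "card S < m" using mpos by linarith
    have "V - S \<noteq> {}"
    proof
      assume "V - S = {}"
      then have "S = V" using Sc(1) unfolding closed_in_g_def by blast
      then show False using \<open>card S < m\<close> unfolding m_def by simp
    qed
    then obtain v where v: "v \<in> V" "v \<notin> S" by auto
    define T where "T = comp X V v"
    have vT: "v \<in> T" unfolding T_def comp_def using v reach_refl by auto
    have TS: "T \<inter> S = {}"
    proof (rule ccontr)
      assume "T \<inter> S \<noteq> {}"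
      then obtain z where z: "z \<in> T" "z \<in> S" by auto
      then have "reach X V z v" unfolding T_def comp_def using reach_sym by auto
      then show False using closed_reach[OF _ Sc(1) z(2)] v by auto
    qed
    have finS: "finite S" "finite T" using Sc finV unfolding closed_in_g_def T_def comp_def
      by (auto intro: finite_subset)
    have cST: "card (S \<union> T) = card S + card T" using TS finS by (simp add: card_Un_disjoint inf_commute)
    have "card T > 0" using vT finS by (auto simp: card_gt_0_iff)
    then have "S \<union> T \<notin> SS" using Smax cST by fastforce
    then have ST: "2 * (card S + card T) > m" using closed_Un[OF Sc(1) comp_closed] cST
      unfolding SS_def T_def by auto
    have T2: "2 * card T < m" using small v unfolding T_def by auto
    define R where "R = V - S - T"
    have TV: "T \<subseteq> V" "S \<subseteq> V" using Sc unfolding T_def comp_def closed_in_g_def by auto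
    have cR: "card R = m - card S - card T"
    proof -
      have "R = V - (S \<union> T)" unfolding R_def by auto
      then have "card R = card V - card (S \<union> T)" using finV TV by (simp add: card_Diff_subset finite_subset)
      then show ?thesis using cST by (simp add: m_def)
    qed
    have sp1: "e_ind X V \<le> e_ind X S + e_ind X (V - S)" using closed_split[OF Sc(1) finX Xpairs] .
    have "closed_in_g X (V - S) T" using closed_sub[OF comp_closed, of X V v "V - S"] TS
      unfolding T_def comp_def by auto
    from closed_split[OF this finX Xpairs]
    have sp2: "e_ind X (V - S) \<le> e_ind X T + e_ind X R" unfolding R_def by (simp add: Diff_Diff_Int)
    have "real (e_ind X V) \<le> (q * real (card S)^2/2 + \<eta>) + (q * real (card T)^2/2 + \<eta>) + (q * real (card R)^2/2 + \<eta>)"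
    proof -
      have "real (e_ind X V) \<le> real (e_ind X S) + real (e_ind X T) + real (e_ind X R)"
        using sp1 sp2 by linarith
      moreover have "R \<subseteq> V" unfolding R_def by auto
      ultimately show ?thesis using qS[of S] qS[of T] qS[of R] TV by linarith
    qed
    define a b c where "a = real (card S)" "b = real (card T)" "c = real (card R)"
    have abc: "a + b + c = real m" "2*a \<le> real m" "2*b \<le> real m" "2 * c \<le> real m" "a \<ge> 0" "b \<ge> 0" "c \<ge> 0"
      using cR ST T2 Sc(2) unfolding a_b_c_def by auto
    have "a*a \<le> real m / 2 * a" "b*b \<le> real m / 2 * b" "c*c \<le> real m / 2 * c"
      using mult_right_mono[of a "real m/2" a] mult_right_mono[of b "real m/2" b]
        mult_right_mono[of c "real m/2" c] abc by auto
    then have "a^2 + b^2 + c^2 \<le> real m / 2 * (a + b + c)"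
      unfolding power2_eq_square distrib_left by linarith
    then have sq: "a^2 + b^2 + c^2 \<le> real m^2 / 2" using abc by (simp add: power2_eq_square)
    have "q * (p * real m^2 / 2 - \<delta>^4 * real n^2) \<le> q * ((a^2+b^2+c^2)/2 + 3 * ((\<delta>^4)^2 * real n^2 / 4))"
    proof -
      have u1: "q * (p * real m^2 / 2 - \<delta>^4 * real n^2) \<le> real (e_ind X V)"
        using p1 unfolding m_def by (simp add: algebra_simps)
      have u2: "real (e_ind X V) \<le> q * ((a^2+b^2+c^2)/2 + 3 * ((\<delta>^4)^2 * real n^2 / 4))"
        using \<open>real (e_ind X V) \<le> _\<close> unfolding a_b_c_def \<eta>_def by (simp add: algebra_simps add_divide_distrib)
      show ?thesis by (rule order_trans[OF u1 u2])
    qed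
    then have i3: "p * real m^2 / 2 - \<delta>^4 * real n^2 \<le> (a^2+b^2+c^2)/2 + 3 * ((\<delta>^4)^2 * real n^2 / 4)"
      using q by simp
    have pm2: "2 * (p * real m^2) = real m^2 + s^2 * real m^2" using s(1) by (simp add: left_diff_distrib)
    have "s^2 * real m^2 \<le> 4 * (\<delta>^2 * real m^2) + 3 * (\<delta>^6 * real m^2)"
      by (rule arith3[OF i3 sq e1 e2 pm2])
    then have "s^2 * real m^2 \<le> (4 * \<delta>^2 + 3 * \<delta>^6) * real m^2" by (simp add: distrib_right)
    then have "s^2 \<le> 4 * \<delta>^2 + 3 * \<delta>^6" using mpos by simp
    moreover have "\<delta>^6 \<le> \<delta>^2" using d by (intro power_decreasing) auto
    moreover have "(100*\<delta>)^2 \<le> s^2" using d by (intro power_mono) auto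
    moreover have "\<delta>*\<delta> > 0" using d by simp
    ultimately show ?thesis unfolding power2_eq_square power_mult_distrib by linarith
  qed
qed


lemma bip_bound:
  fixes E :: "nat set set" and A B :: "nat set"
  assumes finE: "finite E" and Epairs: "\<forall>e\<in>E. \<exists>u w. e = {u, w}" and disj: "A \<inter> B = {}"
  shows "e_ind E A + e_ind E B + card (bip_edges E A B) \<le> e_ind E (A \<union> B)"
proof -
  have d1: "{e \<in> E. e \<subseteq> A} \<inter> {e \<in> E. e \<subseteq> B} = {}"
  proof (rule ccontr)
    assume "{e \<in> E. e \<subseteq> A} \<inter> {e \<in> E. e \<subseteq> B} \<noteq> {}"
    then obtain e where "e \<in> E" "e \<subseteq> A" "e \<subseteq> B" by auto
    moreover obtain u w where "e = {u, w}" using Epairs \<open>e \<in> E\<close> by blast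
    ultimately show False using disj by auto
  qed
  have d2: "({e \<in> E. e \<subseteq> A} \<union> {e \<in> E. e \<subseteq> B}) \<inter> bip_edges E A B = {}"
    unfolding bip_edges_def using disj by auto
  have fin: "finite {e \<in> E. e \<subseteq> A}" "finite {e \<in> E. e \<subseteq> B}" "finite (bip_edges E A B)"
    using finE unfolding bip_edges_def by auto
  have "e_ind E A + e_ind E B + card (bip_edges E A B)
      = card ({e \<in> E. e \<subseteq> A} \<union> {e \<in> E. e \<subseteq> B} \<union> bip_edges E A B)"
    unfolding e_ind_def using d1 d2 fin by (simp add: card_Un_disjoint)
  also have "\<dots> \<le> e_ind E (A \<union> B)" unfolding e_ind_def bip_edges_def
    using finE by (intro card_mono) auto
  finally show ?thesis .
qed

lemma arith4:
  fixes PAB N4 K N8 AB D2 D6 S :: real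
  shows "PAB - N4 \<le> K + 6*(N8/4) \<Longrightarrow> 2*K \<le> AB \<Longrightarrow> N4 \<le> D2 \<Longrightarrow> N8 \<le> D6 \<Longrightarrow> 2*PAB = AB + S \<Longrightarrow> S \<le> 2*D2 + 3*D6"
  by linarith

lemma p4_det:
  fixes X E :: "nat set set" and A B CA CB :: "nat set" and q p \<delta> s :: real and n :: nat
  assumes XE: "X \<subseteq> E" and finE: "finite E" and Epairs: "\<forall>e\<in>E. \<exists>u w. e = {u, w}"
    and quasi: "\<forall>U \<subseteq> A \<union> B. \<bar>real (e_ind E U) - q * real (card U)^2 / 2\<bar> \<le> (\<delta>^4)^2 / 4 * q * real n^2"
    and disj: "A \<inter> B = {}" and finA: "finite A" and finB: "finite B"
    and bigA: "real (card A) \<ge> \<delta> * real n" and bigB: "real (card B) \<ge> \<delta> * real n" and n: "n > 0"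
    and d: "\<delta> > 0" "100 * \<delta> \<le> s" "\<delta> \<le> 1" and s: "s^2 = 2*p - 1" "s \<ge> 0" and q: "q > 0"
    and CA: "CA \<subseteq> A" "2 * card CA \<ge> card A" and CB: "CB \<subseteq> B" "2 * card CB \<ge> card B"
    and p2: "real (e_bip X A B) \<ge> p * q * real (card A) * real (card B) - \<delta>^4 * q * real n^2"
  shows "\<exists>u\<in>CA. \<exists>w\<in>CB. reach (bip_edges X A B) (A \<union> B) u w"
proof (rule ccontr)
  assume no: "\<not> ?thesis"
  define H where "H = bip_edges X A B"
  define W where "W = A \<union> B"
  define U where "U = {w \<in> W. \<exists>u\<in>CA. reach H W u w}"
  define \<eta> where "\<eta> = (\<delta>^4)^2 / 4 * q * real n^2"
  have CAU: "CA \<subseteq> U" unfolding U_def W_def using CA reach_refl by blast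
  have UCB: "U \<inter> CB = {}" unfolding U_def using no unfolding H_def W_def by blast
  have stepU: "x \<in> U" if "y \<in> U" "{x, y} \<in> H" "x \<in> W" for x y
  proof -
    have "y \<in> {w \<in> W. \<exists>u\<in>CA. reach H W u w}" using that(1) unfolding U_def .
    then obtain u where u: "u \<in> CA" "reach H W u y" "y \<in> W" by blast
    have "reach H W y x" unfolding reach_def using that u by (intro r_into_rtranclp) (simp add: insert_commute)
    then show ?thesis unfolding U_def using u that reach_trans by blast
  qed
  have finX: "finite X" using XE finE by (rule finite_subset)
  have HE: "H \<subseteq> bip_edges E (A \<inter> U) (B \<inter> U) \<union> bip_edges E (A - U) (B - U)"
  proof
    fix e assume "e \<in> H"
    then obtain x y where xy: "e \<in> X" "x \<in> A" "y \<in> B" "e = {x, y}" unfolding H_def bip_edges_def by auto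
    have "{x, y} \<in> H" "{y, x} \<in> H" using \<open>e \<in> H\<close> xy by (auto simp: insert_commute)
    then have "x \<in> U \<longleftrightarrow> y \<in> U" using stepU xy unfolding W_def by blast
    then show "e \<in> bip_edges E (A \<inter> U) (B \<inter> U) \<union> bip_edges E (A - U) (B - U)"
      using xy XE unfolding bip_edges_def by blast
  qed
  have bipq: "real (card (bip_edges E A' B')) \<le> q * real (card A') * real (card B') + 3 * \<eta>"
    if "A' \<subseteq> A" "B' \<subseteq> B" for A' B'
  proof -
    have dj: "A' \<inter> B' = {}" using disj that by auto
    have fin': "finite A'" "finite B'" using that finA finB by (auto intro: finite_subset)
    have cu: "card (A' \<union> B') = card A' + card B'" using dj fin' by (simp add: card_Un_disjoint)
    have "A' \<union> B' \<subseteq> A \<union> B" "A' \<subseteq> A \<union> B" "B' \<subseteq> A \<union> B" using that by auto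
    then have h1: "real (e_ind E (A' \<union> B')) \<le> q * real (card A' + card B')^2 / 2 + \<eta>"
      and h2: "real (e_ind E A') \<ge> q * real (card A')^2 / 2 - \<eta>"
      and h3: "real (e_ind E B') \<ge> q * real (card B')^2 / 2 - \<eta>"
      using quasi[rule_format, of "A' \<union> B'"] quasi[rule_format, of A'] quasi[rule_format, of B'] cu
      unfolding \<eta>_def abs_le_iff by auto
    have h4: "real (e_ind E A') + real (e_ind E B') + real (card (bip_edges E A' B')) \<le> real (e_ind E (A' \<union> B'))"
      using bip_bound[OF finE Epairs dj] by (simp only: of_nat_add[symmetric] of_nat_le_iff)
    have "q * real (card A' + card B')^2 / 2 = q * real (card A')^2 / 2 + q * real (card B')^2 / 2 + q * real (card A') * real (card B')"
      by (simp add: power2_eq_square algebra_simps)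
    then show ?thesis using h1 h2 h3 h4 by linarith
  qed
  define a b \<alpha> \<beta> where "a = real (card A)" "b = real (card B)" "\<alpha> = real (card (A \<inter> U))" "\<beta> = real (card (B \<inter> U))"
  have cAU: "card (A - U) = card A - card (A \<inter> U)" using finA by (intro card_Diff_subset_Int) simp
  have cBU: "card (B - U) = card B - card (B \<inter> U)" using finB by (intro card_Diff_subset_Int) simp
  have le1: "card (A \<inter> U) \<le> card A" "card (B \<inter> U) \<le> card B" using finA finB by (auto intro: card_mono)
  have "real (e_bip X A B) \<le> real (card (bip_edges E (A \<inter> U) (B \<inter> U))) + real (card (bip_edges E (A - U) (B - U)))"
  proof -
    have "e_bip X A B \<le> card (bip_edges E (A \<inter> U) (B \<inter> U) \<union> bip_edges E (A - U) (B - U))"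
      unfolding e_bip_def H_def[symmetric] using HE finE
      by (intro card_mono) (auto simp: bip_edges_def)
    also have "\<dots> \<le> card (bip_edges E (A \<inter> U) (B \<inter> U)) + card (bip_edges E (A - U) (B - U))"
      by (rule card_Un_le)
    finally show ?thesis by linarith
  qed
  also have "\<dots> \<le> (q * \<alpha> * \<beta> + 3 * \<eta>) + (q * (a - \<alpha>) * (b - \<beta>) + 3 * \<eta>)"
    using bipq[of "A \<inter> U" "B \<inter> U"] bipq[of "A - U" "B - U"] cAU cBU le1
    unfolding a_b_\<alpha>_\<beta>_def by (simp add: of_nat_diff)
  finally have up: "real (e_bip X A B) \<le> q * (\<alpha> * \<beta> + (a - \<alpha>) * (b - \<beta>) + 6 * ((\<delta>^4)^2 * real n^2 / 4))"
    unfolding \<eta>_def by (simp add: algebra_simps)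
  have lo: "q * (p * (a * b) - \<delta>^4 * real n^2) \<le> real (e_bip X A B)"
    using p2 unfolding a_b_\<alpha>_\<beta>_def by (simp add: algebra_simps)
  have i: "p * (a * b) - \<delta>^4 * real n^2 \<le> (\<alpha> * \<beta> + (a - \<alpha>) * (b - \<beta>)) + 6 * ((\<delta>^4)^2 * real n^2 / 4)"
    using order_trans[OF lo up] q by simp
  have al: "2 * \<alpha> - a \<ge> 0"
  proof -
    have "card CA \<le> card (A \<inter> U)" using CA CAU finA by (intro card_mono) auto
    then show ?thesis using CA(2) unfolding a_b_\<alpha>_\<beta>_def by linarith
  qed
  have be: "2 * \<beta> - b \<le> 0"
  proof -
    have "(B \<inter> U) \<union> CB \<subseteq> B" using CB by auto
    moreover have "(B \<inter> U) \<inter> CB = {}" using UCB by auto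
    moreover have "finite (B \<inter> U)" "finite CB" using finB CB(1) by (auto intro: finite_subset)
    ultimately have "card (B \<inter> U) + card CB \<le> card B" using finB
      by (metis card_Un_disjoint card_mono)
    then show ?thesis using CB(2) unfolding a_b_\<alpha>_\<beta>_def by linarith
  qed
  have K: "2 * (\<alpha> * \<beta> + (a - \<alpha>) * (b - \<beta>)) \<le> a * b"
  proof -
    have "2 * (\<alpha> * \<beta> + (a - \<alpha>) * (b - \<beta>)) = a * b + (2 * \<alpha> - a) * (2 * \<beta> - b)"
      by (simp add: algebra_simps)
    moreover have "(2 * \<alpha> - a) * (2 * \<beta> - b) \<le> 0" using al be by (rule mult_nonneg_nonpos)
    ultimately show ?thesis by linarith
  qed
  have ab: "\<delta>^2 * real n^2 \<le> a * b"
  proof -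
    have "(\<delta> * real n) * (\<delta> * real n) \<le> a * b" using bigA bigB d unfolding a_b_\<alpha>_\<beta>_def
      by (intro mult_mono) auto
    then show ?thesis by (simp add: power2_eq_square algebra_simps)
  qed
  have e1: "\<delta>^4 * real n^2 \<le> \<delta>^2 * (a * b)"
    using mult_left_mono[OF ab, of "\<delta>^2"] d by (simp add: power_add[symmetric] mult.assoc[symmetric])
  have e2: "(\<delta>^4)^2 * real n^2 \<le> \<delta>^6 * (a * b)"
    using mult_left_mono[OF ab, of "\<delta>^6"] d by (simp add: power_add[symmetric] power_mult[symmetric] mult.assoc[symmetric])
  have pm: "2 * (p * (a * b)) = a * b + s^2 * (a * b)" using s(1) by (simp add: left_diff_distrib)
  have "s^2 * (a * b) \<le> 2 * (\<delta>^2 * (a * b)) + 3 * (\<delta>^6 * (a * b))"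
    by (rule arith4[OF i K e1 e2 pm])
  then have "s^2 * (a * b) \<le> (2 * \<delta>^2 + 3 * \<delta>^6) * (a * b)" by (simp add: distrib_right)
  moreover have "a * b > 0" using bigA bigB d n unfolding a_b_\<alpha>_\<beta>_def
    by (smt (verit) mult_pos_pos of_nat_0_less_iff)
  ultimately have "s^2 \<le> 2 * \<delta>^2 + 3 * \<delta>^6" by (rule mult_right_le_imp_le)
  moreover have "\<delta>^6 \<le> \<delta>^2" using d by (intro power_decreasing) auto
  moreover have "(100*\<delta>)^2 \<le> s^2" using d by (intro power_mono) auto
  moreover have "\<delta>*\<delta> > 0" using d by simp
  ultimately show False unfolding power2_eq_square power_mult_distrib by linarith
qed


lemma cov_disj:
  fixes \<mu> :: "nat set set pmf"
  assumes int: "\<And>g::nat set set \<Rightarrow> real. integrable (measure_pmf \<mu>) g"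
    and ef: "measure_pmf.prob \<mu> {X. e \<in> X \<and> f \<in> X} = (p::real) * p"
    and pe: "measure_pmf.prob \<mu> {X. e \<in> X} = p" and pf: "measure_pmf.prob \<mu> {X. f \<in> X} = p"
  shows "measure_pmf.expectation \<mu> (\<lambda>X. (indicator X e - p) * (indicator X f - p)) = 0"
proof -
  have eq: "(\<lambda>X. (indicator X e - p) * (indicator X f - p)) =
    (\<lambda>X. indicator {X. e \<in> X \<and> f \<in> X} X - p * indicator {X. e \<in> X} X - p * indicator {X. f \<in> X} X + p * p)"
    by (rule ext) (auto simp: indicator_def algebra_simps)
  show ?thesis unfolding eq using ef pe pf
    by (simp add: int measure_pmf.prob_space)
qed

lemma cov_le1:
  fixes \<mu> :: "nat set set pmf"
  assumes int: "\<And>g::nat set set \<Rightarrow> real. integrable (measure_pmf \<mu>) g"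
    and p: "0 \<le> p" "p \<le> (1::real)"
  shows "measure_pmf.expectation \<mu> (\<lambda>X. (indicator X e - p) * (indicator X f - p)) \<le> 1"
proof -
  have "measure_pmf.expectation \<mu> (\<lambda>X. (indicator X e - p) * (indicator X f - p))
        \<le> measure_pmf.expectation \<mu> (\<lambda>X. 1::real)"
  proof (rule integral_mono[OF int int])
    fix X
    have "\<bar>indicator X e - p\<bar> \<le> (1::real)" "\<bar>indicator X f - p\<bar> \<le> (1::real)" using p by (auto simp: indicator_def)
    then have "\<bar>(indicator X e - p) * (indicator X f - p)\<bar> \<le> (1::real)"
      by (simp add: abs_mult mult_le_one)
    then show "(indicator X e - p) * (indicator X f - p) \<le> (1::real)" by linarith
  qed
  then show ?thesis by (simp add: measure_pmf.prob_space)
qed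

lemma cheb:
  fixes \<mu> :: "nat set set pmf" and E F :: "nat set set" and p t K :: real
  assumes sup: "set_pmf \<mu> \<subseteq> Pow E" and finE: "finite E" and FE: "F \<subseteq> E"
    and indep: "one_indep E \<mu>" and marg: "\<forall>e\<in>E. measure_pmf.prob \<mu> {X. e \<in> X} = p"
    and p: "0 \<le> p" "p \<le> 1"
    and K: "\<forall>e\<in>F. real (card {f\<in>F. f \<inter> e \<noteq> {}}) \<le> K" and t: "t > 0"
  shows "measure_pmf.prob \<mu> {X. real (card (F \<inter> X)) \<le> p * real (card F) - t} \<le> K * real (card F) / t^2"
proof -
  have finS: "finite (set_pmf \<mu>)" using sup finE by (meson finite_Pow_iff finite_subset)
  have int: "\<And>g::nat set set \<Rightarrow> real. integrable (measure_pmf \<mu>) g"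
    by (rule integrable_measure_pmf_finite[OF finS])
  have finF: "finite F" using FE finE by (rule finite_subset)
  define D where "D X = (\<Sum>e\<in>F. (indicator X e - p :: real))" for X
  have D: "D X = real (card (F \<inter> X)) - p * real (card F)" for X
    unfolding D_def sum_subtractf using sum.inter_restrict[OF finF, of "\<lambda>_. 1::real" X] by (simp add: indicator_def of_bool_def)
  define A where "A = {X. real (card (F \<inter> X)) \<le> p * real (card F) - t}"
  have pt: "t^2 * indicator A X \<le> (D X)^2" for X
  proof (cases "X \<in> A")
    case True
    then have "D X \<le> - t" unfolding A_def D by auto
    then have "t * t \<le> (- D X) * (- D X)" using t by (intro mult_mono) auto
    then have "t^2 \<le> (D X)^2" by (simp add: power2_eq_square)
    then show ?thesis using True by simp
  qed simp
  have "t^2 * measure_pmf.prob \<mu> A = measure_pmf.expectation \<mu> (\<lambda>X. t^2 * indicator A X)"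
    by simp
  also have "\<dots> \<le> measure_pmf.expectation \<mu> (\<lambda>X. (D X)^2)"
    by (rule integral_mono[OF int int pt])
  also have "(\<lambda>X. (D X)^2) = (\<lambda>X. \<Sum>e\<in>F. \<Sum>f\<in>F. (indicator X e - p) * (indicator X f - p))"
    unfolding D_def power2_eq_square by (simp add: sum_product)
  also have "measure_pmf.expectation \<mu> \<dots> = (\<Sum>e\<in>F. \<Sum>f\<in>F. measure_pmf.expectation \<mu> (\<lambda>X. (indicator X e - p) * (indicator X f - p)))"
    by (simp add: int integral_sum)
  also have "\<dots> \<le> (\<Sum>e\<in>F. real (card {f\<in>F. f \<inter> e \<noteq> {}}))"
  proof (rule sum_mono)
    fix e assume e: "e \<in> F"
    have "(\<Sum>f\<in>F. measure_pmf.expectation \<mu> (\<lambda>X. (indicator X e - p) * (indicator X f - p)))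
        = (\<Sum>f\<in>{f\<in>F. f \<inter> e \<noteq> {}}. measure_pmf.expectation \<mu> (\<lambda>X. (indicator X e - p) * (indicator X f - p)))"
    proof (rule sum.mono_neutral_right[OF finF])
      show "{f \<in> F. f \<inter> e \<noteq> {}} \<subseteq> F" by auto
      show "\<forall>f\<in>F - {f \<in> F. f \<inter> e \<noteq> {}}. measure_pmf.expectation \<mu> (\<lambda>X. (indicator X e - p) * (indicator X f - p)) = 0"
      proof
        fix f assume f: "f \<in> F - {f \<in> F. f \<inter> e \<noteq> {}}"
        then have fe: "f \<in> E" "e \<in> E" "\<Union>{e} \<inter> \<Union>{f} = {}" using e FE by auto
        have "{e} \<subseteq> E" "{f} \<subseteq> E" using fe by auto
        from indep[unfolded one_indep_def, rule_format, OF this fe(3), of "{{e}}" "{{f}}"]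
        have "measure_pmf.prob \<mu> {X. X \<inter> {e} \<in> {{e}} \<and> X \<inter> {f} \<in> {{f}}} =
              measure_pmf.prob \<mu> {X. X \<inter> {e} \<in> {{e}}} * measure_pmf.prob \<mu> {X. X \<inter> {f} \<in> {{f}}}" .
        moreover have h1: "{X. X \<inter> {e} \<in> {{e}}} = {X. e \<in> X}" "{X. X \<inter> {f} \<in> {{f}}} = {X. f \<in> X}" by auto
        moreover have h2: "{X. X \<inter> {e} \<in> {{e}} \<and> X \<inter> {f} \<in> {{f}}} = {X. e \<in> X \<and> f \<in> X}" by auto
        ultimately have "measure_pmf.prob \<mu> {X. e \<in> X \<and> f \<in> X} = measure_pmf.prob \<mu> {X. e \<in> X} * measure_pmf.prob \<mu> {X. f \<in> X}"
          by (simp only: h1 h2)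
        then have "measure_pmf.prob \<mu> {X. e \<in> X \<and> f \<in> X} = p * p" using marg fe by simp
        then show "measure_pmf.expectation \<mu> (\<lambda>X. (indicator X e - p) * (indicator X f - p)) = 0"
          using cov_disj[OF int] marg fe by simp
      qed
    qed
    also have "\<dots> \<le> (\<Sum>f\<in>{f\<in>F. f \<inter> e \<noteq> {}}. 1)"
      by (rule sum_mono) (rule cov_le1[OF int p])
    finally show "(\<Sum>f\<in>F. measure_pmf.expectation \<mu> (\<lambda>X. (indicator X e - p) * (indicator X f - p)))
        \<le> real (card {f\<in>F. f \<inter> e \<noteq> {}})" by simp
  qed
  also have "\<dots> \<le> (\<Sum>e\<in>F. K)" by (rule sum_mono) (use K in auto)
  also have "\<dots> = K * real (card F)" by simp
  finally have "t^2 * measure_pmf.prob \<mu> A \<le> K * real (card F)" .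
  then show ?thesis unfolding A_def[symmetric] using t by (simp add: field_simps)
qed


lemma prob_mono_supp:
  fixes \<mu> :: "'a pmf"
  assumes "\<And>X. X \<in> set_pmf \<mu> \<Longrightarrow> X \<in> A \<Longrightarrow> X \<in> B"
  shows "measure_pmf.prob \<mu> A \<le> measure_pmf.prob \<mu> B"
proof -
  have "measure_pmf.prob \<mu> A = measure_pmf.prob \<mu> (A \<inter> set_pmf \<mu>)" by (simp add: measure_Int_set_pmf)
  also have "\<dots> \<le> measure_pmf.prob \<mu> B" using assms by (intro measure_pmf.finite_measure_mono) auto
  finally show ?thesis .
qed

lemma Kbound:
  assumes "F \<subseteq> edges_on {..<n}" "e \<in> edges_on {..<n}"
  shows "real (card {f\<in>F. f \<inter> e \<noteq> {}}) \<le> 2 * real n"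
proof -
  obtain u w where e: "e = {u, w}" using assms(2) unfolding edges_on_def by auto
  have "{f\<in>F. f \<inter> e \<noteq> {}} \<subseteq> (\<lambda>z. {u, z}) ` {..<n} \<union> (\<lambda>z. {w, z}) ` {..<n}"
  proof
    fix f assume f: "f \<in> {f\<in>F. f \<inter> e \<noteq> {}}"
    then have "f \<in> edges_on {..<n}" using assms(1) by auto
    then obtain a b where ab: "f = {a, b}" "a < n" "b < n" unfolding edges_on_def by auto
    show "f \<in> (\<lambda>z. {u, z}) ` {..<n} \<union> (\<lambda>z. {w, z}) ` {..<n}"
      using f ab e by (auto simp: insert_commute)
  qed
  then have "card {f\<in>F. f \<inter> e \<noteq> {}} \<le> card ((\<lambda>z. {u, z}) ` {..<n} \<union> (\<lambda>z. {w, z}) ` {..<n})"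
    by (intro card_mono) auto
  also have "\<dots> \<le> card ((\<lambda>z. {u, z}) ` {..<n}) + card ((\<lambda>z. {w, z}) ` {..<n})" by (rule card_Un_le)
  also have "\<dots> \<le> n + n" by (intro add_mono) (auto intro: card_image_le[THEN order_trans])
  finally show ?thesis by simp
qed

lemma finite_edges_on: "finite (edges_on {..<n})"
proof -
  have "edges_on {..<n} \<subseteq> Pow {..<n}" unfolding edges_on_def by auto
  then show ?thesis by (rule finite_subset) simp
qed

lemma edges_pairs: "E \<subseteq> edges_on S \<Longrightarrow> \<forall>e\<in>E. \<exists>u w. e = {u, w}"
  unfolding edges_on_def by blast

lemma eE_total:
  assumes "E \<subseteq> edges_on {..<n}"
    and quasi: "\<forall>U \<subseteq> {..<n}. \<bar>real (e_ind E U) - q * real (card U)^2 / 2\<bar> \<le> \<epsilon>^2 / 4 * q * real n^2"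
    and "0 < \<epsilon>" "\<epsilon> \<le> 1" "q > 0"
  shows "real (e_ind E {..<n}) \<le> q * real n^2"
proof -
  have "real (e_ind E {..<n}) \<le> q * real n^2 / 2 + \<epsilon>^2 / 4 * q * real n^2"
    using quasi[rule_format, of "{..<n}"] unfolding abs_le_iff by simp
  moreover have "\<epsilon>^2 / 4 * q * real n^2 \<le> 1 / 4 * q * real n^2"
    using assms by (intro mult_right_mono) (auto simp: power_le_one)
  ultimately show ?thesis by simp
qed

lemma p1_prob:
  fixes \<mu> :: "nat set set pmf"
  assumes EE: "E \<subseteq> edges_on {..<n}"
    and quasi: "\<forall>U \<subseteq> {..<n}. \<bar>real (e_ind E U) - q * real (card U)^2 / 2\<bar> \<le> \<epsilon>^2 / 4 * q * real n^2"
    and mu: "\<mu> \<in> M1p E p" and p: "1/2 < p" "p \<le> 1" and eps: "0 < \<epsilon>" "\<epsilon> \<le> 1" and q: "q > 0" and n: "n > 0"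
    and V: "V \<subseteq> {..<n}"
  shows "measure_pmf.prob \<mu> {X. \<not> (real (e_ind X V) \<ge> p * q * real (card V)^2 / 2 - \<epsilon> * q * real n^2)}
         \<le> 8 / (\<epsilon>^2 * q * real n)"
proof -
  define F where "F = {e \<in> E. e \<subseteq> V}"
  define t where "t = \<epsilon> * q * real n^2 / 2"
  have finE: "finite E" using EE finite_edges_on by (rule finite_subset)
  have sup: "set_pmf \<mu> \<subseteq> Pow E" and indep: "one_indep E \<mu>" and marg: "\<forall>e\<in>E. measure_pmf.prob \<mu> {X. e \<in> X} = p"
    using mu unfolding M1p_def by auto
  have t: "t > 0" unfolding t_def using eps q n by simp
  have FE: "F \<subseteq> E" unfolding F_def by auto
  have K: "\<forall>e\<in>F. real (card {f\<in>F. f \<inter> e \<noteq> {}}) \<le> 2 * real n"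
    using Kbound[of F n] FE EE by blast
  have Fup: "real (card F) \<le> q * real n^2"
  proof -
    have "card F \<le> e_ind E {..<n}" unfolding F_def e_ind_def using V finE by (intro card_mono) auto
    then show ?thesis using eE_total[OF EE quasi eps q] by linarith
  qed
  have Flo: "real (card F) \<ge> q * real (card V)^2 / 2 - \<epsilon>^2 / 4 * q * real n^2"
    using quasi[rule_format, OF V] unfolding F_def e_ind_def abs_le_iff by linarith
  have thr: "p * q * real (card V)^2 / 2 - \<epsilon> * q * real n^2 \<le> p * real (card F) - t"
  proof -
    have "p * (\<epsilon>^2 / 4 * q * real n^2) \<le> 1 * (\<epsilon> * q * real n^2 / 2)"
    proof (rule mult_mono)
      have "\<epsilon>^2 \<le> \<epsilon>" using eps by (simp add: power2_eq_square mult_le_cancel_right1 mult_left_le)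
      then have a: "\<epsilon>^2/4 \<le> \<epsilon>/2" using eps by linarith
      have "\<epsilon>^2/4 * (q*real n^2) \<le> \<epsilon>/2 * (q * real n^2)" by (rule mult_right_mono[OF a]) (use q in simp)
      then show "\<epsilon>^2 / 4 * q * real n^2 \<le> \<epsilon> * q * real n^2 / 2" by (simp add: algebra_simps)
    qed (use p eps q in auto)
    moreover have "p * real (card F) \<ge> p * (q * real (card V)^2 / 2 - \<epsilon>^2 / 4 * q * real n^2)"
      using Flo p by (intro mult_left_mono) auto
    ultimately show ?thesis unfolding t_def by (simp add: algebra_simps)
  qed
  have "measure_pmf.prob \<mu> {X. \<not> (real (e_ind X V) \<ge> p * q * real (card V)^2 / 2 - \<epsilon> * q * real n^2)}
        \<le> measure_pmf.prob \<mu> {X. real (card (F \<inter> X)) \<le> p * real (card F) - t}"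
  proof (rule prob_mono_supp)
    fix X assume X: "X \<in> set_pmf \<mu>" "X \<in> {X. \<not> (real (e_ind X V) \<ge> p * q * real (card V)^2 / 2 - \<epsilon> * q * real n^2)}"
    then have "X \<subseteq> E" using sup by auto
    then have "{e \<in> X. e \<subseteq> V} = F \<inter> X" unfolding F_def by auto
    then have "e_ind X V = card (F \<inter> X)" unfolding e_ind_def by simp
    then show "X \<in> {X. real (card (F \<inter> X)) \<le> p * real (card F) - t}" using X thr by auto
  qed
  also have "\<dots> \<le> 2 * real n * real (card F) / t^2"
    by (rule cheb[OF sup finE FE indep marg _ _ K t]) (use p in auto)
  also have "\<dots> \<le> 2 * real n * (q * real n^2) / t^2"
    using Fup n by (intro divide_right_mono mult_left_mono) auto
  also have "\<dots> = 8 / (\<epsilon>^2 * q * real n)"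
    unfolding t_def using eps q n by (simp add: field_simps power2_eq_square)
  finally show ?thesis .
qed


lemma bip_cover:
  fixes E :: "nat set set" and A B :: "nat set"
  assumes finE: "finite E" and Epairs: "\<forall>e\<in>E. \<exists>u w. e = {u, w}"
  shows "e_ind E (A \<union> B) \<le> e_ind E A + e_ind E B + card (bip_edges E A B)"
proof -
  have "{e \<in> E. e \<subseteq> A \<union> B} \<subseteq> {e \<in> E. e \<subseteq> A} \<union> {e \<in> E. e \<subseteq> B} \<union> bip_edges E A B"
  proof
    fix e assume e: "e \<in> {e \<in> E. e \<subseteq> A \<union> B}"
    then obtain u w where uw: "e = {u, w}" using Epairs by blast
    show "e \<in> {e \<in> E. e \<subseteq> A} \<union> {e \<in> E. e \<subseteq> B} \<union> bip_edges E A B"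
      using e uw unfolding bip_edges_def by (auto simp: insert_commute)
  qed
  then have "e_ind E (A \<union> B) \<le> card ({e \<in> E. e \<subseteq> A} \<union> {e \<in> E. e \<subseteq> B} \<union> bip_edges E A B)"
    unfolding e_ind_def using finE by (intro card_mono) (auto simp: bip_edges_def)
  also have "\<dots> \<le> e_ind E A + e_ind E B + card (bip_edges E A B)"
    unfolding e_ind_def by (meson card_Un_le add_mono order_trans le_refl)
  finally show ?thesis .
qed

lemma p2_prob:
  fixes \<mu> :: "nat set set pmf"
  assumes EE: "E \<subseteq> edges_on {..<n}"
    and quasi: "\<forall>U \<subseteq> {..<n}. \<bar>real (e_ind E U) - q * real (card U)^2 / 2\<bar> \<le> \<epsilon>^2 / 4 * q * real n^2"
    and mu: "\<mu> \<in> M1p E p" and p: "1/2 < p" "p \<le> 1" and eps: "0 < \<epsilon>" "\<epsilon> \<le> 1" and q: "q > 0" and n: "n > 0"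
    and A: "A \<subseteq> {..<n}" and B: "B \<subseteq> {..<n}" and disj: "A \<inter> B = {}"
  shows "measure_pmf.prob \<mu> {X. \<not> (real (e_bip X A B) \<ge> p * q * real (card A) * real (card B) - \<epsilon> * q * real n^2)}
         \<le> 32 / (\<epsilon>^2 * q * real n)"
proof -
  define F where "F = bip_edges E A B"
  define t where "t = \<epsilon> * q * real n^2 / 4"
  define \<eta> where "\<eta> = \<epsilon>^2 / 4 * q * real n^2"
  have finE: "finite E" using EE finite_edges_on by (rule finite_subset)
  have sup: "set_pmf \<mu> \<subseteq> Pow E" and indep: "one_indep E \<mu>" and marg: "\<forall>e\<in>E. measure_pmf.prob \<mu> {X. e \<in> X} = p"
    using mu unfolding M1p_def by auto
  have t: "t > 0" unfolding t_def using eps q n by simp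
  have FE: "F \<subseteq> E" unfolding F_def bip_edges_def by auto
  have K: "\<forall>e\<in>F. real (card {f\<in>F. f \<inter> e \<noteq> {}}) \<le> 2 * real n"
    using Kbound[of F n] FE EE by blast
  have Fup: "real (card F) \<le> q * real n^2"
  proof -
    have "card F \<le> e_ind E {..<n}" unfolding F_def e_ind_def bip_edges_def using A B finE
      by (intro card_mono) auto
    then show ?thesis using eE_total[OF EE quasi eps q] by linarith
  qed
  have Flo: "real (card F) \<ge> q * real (card A) * real (card B) - 3 * \<eta>"
  proof -
    have bb: "e_ind E (A \<union> B) \<le> e_ind E A + e_ind E B + card F"
      unfolding F_def by (rule bip_cover[OF finE edges_pairs[OF EE]])
    have cu: "card (A \<union> B) = card A + card B" using disj A B by (intro card_Un_disjoint) (auto intro: finite_subset)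
    have h1: "real (e_ind E (A \<union> B)) \<ge> q * real (card A + card B)^2 / 2 - \<eta>"
      using quasi[rule_format, of "A \<union> B"] A B cu unfolding \<eta>_def abs_le_iff by auto
    have h2: "real (e_ind E A) \<le> q * real (card A)^2 / 2 + \<eta>"
      using quasi[rule_format, OF A] unfolding \<eta>_def abs_le_iff by linarith
    have h3: "real (e_ind E B) \<le> q * real (card B)^2 / 2 + \<eta>"
      using quasi[rule_format, OF B] unfolding \<eta>_def abs_le_iff by linarith
    have h4: "real (e_ind E (A \<union> B)) \<le> real (e_ind E A) + real (e_ind E B) + real (card F)"
      using bb by (simp only: of_nat_add[symmetric] of_nat_le_iff)
    have "q * real (card A + card B)^2 / 2 = q * real (card A)^2 / 2 + q * real (card B)^2 / 2 + q * real (card A) * real (card B)"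
      by (simp add: power2_eq_square algebra_simps)
    then show ?thesis using h1 h2 h3 h4 by linarith
  qed
  have thr: "p * q * real (card A) * real (card B) - \<epsilon> * q * real n^2 \<le> p * real (card F) - t"
  proof -
    have "p * (3 * \<eta>) \<le> 1 * (3 * (\<epsilon> * q * real n^2 / 4))"
    proof (rule mult_mono)
      have "\<epsilon>^2 \<le> \<epsilon>" using eps by (simp add: power2_eq_square mult_le_cancel_right1 mult_left_le)
      then have a: "\<epsilon>^2/4 \<le> \<epsilon>/4" using eps by linarith
      have "\<epsilon>^2/4 * (q*real n^2) \<le> \<epsilon>/4 * (q * real n^2)" by (rule mult_right_mono[OF a]) (use q in simp)
      then show "3 * \<eta> \<le> 3 * (\<epsilon> * q * real n^2 / 4)" unfolding \<eta>_def by (simp add: algebra_simps)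
    qed (use p eps q in \<open>auto simp: \<eta>_def\<close>)
    moreover have "p * real (card F) \<ge> p * (q * real (card A) * real (card B) - 3 * \<eta>)"
      using Flo p by (intro mult_left_mono) auto
    ultimately show ?thesis unfolding t_def by (simp add: algebra_simps)
  qed
  have "measure_pmf.prob \<mu> {X. \<not> (real (e_bip X A B) \<ge> p * q * real (card A) * real (card B) - \<epsilon> * q * real n^2)}
        \<le> measure_pmf.prob \<mu> {X. real (card (F \<inter> X)) \<le> p * real (card F) - t}"
  proof (rule prob_mono_supp)
    fix X assume X: "X \<in> set_pmf \<mu>" "X \<in> {X. \<not> (real (e_bip X A B) \<ge> p * q * real (card A) * real (card B) - \<epsilon> * q * real n^2)}"
    then have "X \<subseteq> E" using sup by auto
    then have "bip_edges X A B = F \<inter> X" unfolding F_def bip_edges_def by auto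
    then have "e_bip X A B = card (F \<inter> X)" unfolding e_bip_def by simp
    then show "X \<in> {X. real (card (F \<inter> X)) \<le> p * real (card F) - t}" using X thr by auto
  qed
  also have "\<dots> \<le> 2 * real n * real (card F) / t^2"
    by (rule cheb[OF sup finE FE indep marg _ _ K t]) (use p in auto)
  also have "\<dots> \<le> 2 * real n * (q * real n^2) / t^2"
    using Fup n by (intro divide_right_mono mult_left_mono) auto
  also have "\<dots> = 32 / (\<epsilon>^2 * q * real n)"
    unfolding t_def using eps q n by (simp add: field_simps power2_eq_square)
  finally show ?thesis .
qed


lemma main_det:
  fixes p \<epsilon> q \<delta> s :: real and n :: nat and V :: "nat \<Rightarrow> nat set" and E X :: "nat set set"
  assumes n: "n > 0" and q: "q > 0" and EE: "E \<subseteq> edges_on {..<n}"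
    and quasi: "\<forall>U \<subseteq> {..<n}. \<bar>real (e_ind E U) - q * real (card U)^2 / 2\<bar> \<le> \<epsilon>^2 / 4 * q * real n^2"
    and part: "V 1 \<union> V 2 \<union> V 3 = {..<n} \<and> V 1 \<inter> V 2 = {} \<and> V 1 \<inter> V 3 = {} \<and> V 2 \<inter> V 3 = {}"
    and XE: "X \<subseteq> E"
    and dpow: "\<epsilon> powr (1/4) = \<delta>" and d4: "\<delta>^4 = \<epsilon>" and d: "\<delta> > 0" "100 * \<delta> \<le> s" "\<delta> \<le> 1"
    and sdef: "sqrt (2*p - 1) = s" and s: "s^2 = 2*p - 1" "s \<ge> 0" "s \<le> 1"
    and P1: "\<forall>i\<in>{1,2,3}. real (e_ind X (V i)) \<ge> p * q * real (card (V i))^2 / 2 - \<epsilon> * q * real n^2"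
    and P2: "\<forall>i\<in>{1,2,3}. \<forall>j\<in>{1,2,3}. i < j \<longrightarrow>
             real (e_bip X (V i) (V j)) \<ge> p * q * real (card (V i)) * real (card (V j)) - \<epsilon> * q * real n^2"
  shows "let \<theta> = (1 + sqrt (2*p - 1)) / 2; big = (\<lambda>i. real (card (V i)) \<ge> \<epsilon> powr (1/4) * real n) in
          (\<forall>i\<in>{1,2,3}. real (e_ind X (V i)) \<ge> p * q * real (card (V i))^2 / 2 - \<epsilon> * q * real n^2) \<and>
          (\<forall>i\<in>{1,2,3}. \<forall>j\<in>{1,2,3}. i < j \<longrightarrow>
             real (e_bip X (V i) (V j)) \<ge> p * q * real (card (V i)) * real (card (V j)) - \<epsilon> * q * real n^2) \<and>
          (\<exists>Cs :: nat \<Rightarrow> nat set.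
             (\<forall>i\<in>{1,2,3}. big i \<longrightarrow>
                unique_largest_comp X (V i) (Cs i) \<and>
                real (card (Cs i)) \<ge> (\<theta> - \<epsilon> powr (1/4)) * real (card (V i))) \<and>
             (\<forall>i\<in>{1,2,3}. \<forall>j\<in>{1,2,3}. i < j \<longrightarrow> big i \<longrightarrow> big j \<longrightarrow>
                (\<exists>u\<in>Cs i. \<exists>w\<in>Cs j. reach (bip_edges X (V i) (V j)) (V i \<union> V j) u w)) \<and>
             (\<exists>C. unique_largest_comp X {..<n} C \<and>
                  real (card C) \<ge> (\<theta> - 3 * \<epsilon> powr (1/4)) * real n \<and>
                  (\<forall>i\<in>{1,2,3}. big i \<longrightarrow> Cs i \<subseteq> C)))"
proof -
  define big where "big = (\<lambda>i. real (card (V i)) \<ge> \<delta> * real n)"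
  define th where "th = (1 + s) / 2"
  have finE: "finite E" using EE finite_edges_on by (rule finite_subset)
  have Ep: "\<forall>e\<in>E. \<exists>u w. e = {u, w}" by (rule edges_pairs[OF EE])
  have Vsub: "V i \<subseteq> {..<n}" if "i \<in> {1,2,3}" for i using part that by auto
  have finV: "finite (V i)" if "i \<in> {1,2,3}" for i using Vsub[OF that] finite_subset by blast
  have Vdisj: "V i \<inter> V j = {}" if "i \<in> {1,2,3}" "j \<in> {1,2,3}" "i \<noteq> j" for i j
    using part that by auto
  have quasi': "\<forall>U \<subseteq> {..<n}. \<bar>real (e_ind E U) - q * real (card U)^2 / 2\<bar> \<le> (\<delta>^4)^2 / 4 * q * real n^2"
    using quasi d4 by simp
  have p3: "\<exists>v\<in>V i. unique_largest_comp X (V i) (comp X (V i) v) \<and>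
            real (card (comp X (V i) v)) \<ge> ((1 + s)/2 - \<delta>) * real (card (V i))"
    if i: "i \<in> {1,2,3}" and bi: "big i" for i
  proof (rule p3_det[OF XE finE Ep _ finV[OF i] _ n d s(1,2) q])
    show "\<forall>U \<subseteq> V i. real (e_ind E U) \<le> q * real (card U)^2 / 2 + (\<delta>^4)^2 / 4 * q * real n^2"
    proof (intro allI impI)
      fix U assume "U \<subseteq> V i"
      then have "U \<subseteq> {..<n}" using Vsub[OF i] by auto
      then have "\<bar>real (e_ind E U) - q * real (card U)^2 / 2\<bar> \<le> (\<delta>^4)^2 / 4 * q * real n^2" using quasi' by blast
      then show "real (e_ind E U) \<le> q * real (card U)^2 / 2 + (\<delta>^4)^2 / 4 * q * real n^2"
        unfolding abs_le_iff by linarith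
    qed
    show "\<delta> * real n \<le> real (card (V i))" using bi unfolding big_def .
    show "p * q * real (card (V i))^2 / 2 - \<delta>^4 * q * real n^2 \<le> real (e_ind X (V i))"
      using P1 i d4 by auto
  qed
  have "\<forall>i. \<exists>v. i \<in> {1,2,3} \<and> big i \<longrightarrow> v \<in> V i \<and> unique_largest_comp X (V i) (comp X (V i) v) \<and>
            real (card (comp X (V i) v)) \<ge> ((1 + s)/2 - \<delta>) * real (card (V i))"
    using p3 by blast
  from choice[OF this] obtain v where v: "\<And>i. i \<in> {1,2,3} \<Longrightarrow> big i \<Longrightarrow> v i \<in> V i \<and> unique_largest_comp X (V i) (comp X (V i) (v i)) \<and>
            real (card (comp X (V i) (v i))) \<ge> ((1 + s)/2 - \<delta>) * real (card (V i))"
    by blast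
  define Cs where "Cs i = comp X (V i) (v i)" for i
  have Cs_sub: "Cs i \<subseteq> V i" for i unfolding Cs_def comp_def by auto
  have Cs_half: "2 * card (Cs i) \<ge> card (V i)" if "i \<in> {1,2,3}" "big i" for i
  proof -
    have "real (card (Cs i)) \<ge> ((1 + s)/2 - \<delta>) * real (card (V i))" using v[OF that] unfolding Cs_def by auto
    moreover have "((1 + s)/2 - \<delta>) * real (card (V i)) \<ge> 1/2 * real (card (V i))"
    proof (rule mult_right_mono)
      show "1/2 \<le> (1 + s)/2 - \<delta>" using d by (simp add: field_simps)
    qed simp
    ultimately show ?thesis by linarith
  qed
  have p4: "\<exists>u\<in>Cs i. \<exists>w\<in>Cs j. reach (bip_edges X (V i) (V j)) (V i \<union> V j) u w"
    if ij: "i \<in> {1,2,3}" "j \<in> {1,2,3}" "i < j" and b: "big i" "big j" for i j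
  proof (rule p4_det[OF XE finE Ep _ Vdisj finV finV _ _ n d s(1,2) q Cs_sub Cs_half Cs_sub Cs_half])
    show "\<forall>U \<subseteq> V i \<union> V j. \<bar>real (e_ind E U) - q * real (card U)^2 / 2\<bar> \<le> (\<delta>^4)^2 / 4 * q * real n^2"
      using quasi' Vsub[OF ij(1)] Vsub[OF ij(2)] by blast
    show "p * q * real (card (V i)) * real (card (V j)) - \<delta>^4 * q * real n^2 \<le> real (e_bip X (V i) (V j))"
      using P2 ij d4 by auto
  qed (use ij b big_def in auto)
  have reach_up: "reach X {..<n} x y" if "reach X (V i) x y" "i \<in> {1,2,3}" for x y i
    using reach_mono[OF order_refl Vsub[OF that(2)] that(1)] .
  have reach_bip_up: "reach X {..<n} x y" if "reach (bip_edges X (V i) (V j)) (V i \<union> V j) x y" "i \<in> {1,2,3}" "j \<in> {1,2,3}" for x y i j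
    using reach_mono[OF _ _ that(1)] Vsub[OF that(2)] Vsub[OF that(3)] unfolding bip_edges_def by blast
  have link: "\<exists>u\<in>Cs i. \<exists>w\<in>Cs j. reach X {..<n} u w"
    if ij: "i \<in> {1,2,3}" "j \<in> {1,2,3}" "i \<noteq> j" and b: "big i" "big j" for i j
  proof (cases "i < j")
    case True
    then show ?thesis using p4[OF ij(1,2) True b] reach_bip_up[OF _ ij(1,2)] by blast
  next
    case False
    then have "j < i" using ij by auto
    then obtain u w where "u \<in> Cs j" "w \<in> Cs i" "reach X {..<n} u w"
      using p4[OF ij(2,1) _ b(2,1)] reach_bip_up[OF _ ij(2,1)] by blast
    then show ?thesis using reach_sym by blast
  qed
  have sumV: "card (V 1) + card (V 2) + card (V 3) = n"
  proof -
    have f: "finite (V 1)" "finite (V 2)" "finite (V 3)" using finV by auto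
    have c12: "card (V 1 \<union> V 2) = card (V 1) + card (V 2)" using f part by (intro card_Un_disjoint) auto
    have "card (V 1 \<union> V 2 \<union> V 3) = card (V 1 \<union> V 2) + card (V 3)" using f part by (intro card_Un_disjoint) auto
    then have "card {..<n} = card (V 1) + card (V 2) + card (V 3)" using c12 part by simp
    then show ?thesis by simp
  qed
  have somebig: "\<exists>i\<in>{1,2,3}. big i"
  proof (rule ccontr)
    assume "\<not> ?thesis"
    then have "real (card (V 1)) < \<delta> * real n" "real (card (V 2)) < \<delta> * real n" "real (card (V 3)) < \<delta> * real n"
      unfolding big_def by auto
    moreover note sumV
    moreover have "\<delta> * real n \<le> real n / 100" using d n s by simp
    ultimately show False using n by linarith
  qed
  then obtain i0 where i0: "i0 \<in> {1,2,3}" "big i0" by blast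
  define v0 where "v0 = v i0"
  define C where "C = comp X {..<n} v0"
  have v0: "v0 \<in> V i0" using v[OF i0] unfolding v0_def by auto
  have reach_v0: "reach X {..<n} v0 w" if j: "j \<in> {1,2,3}" "big j" and w: "w \<in> Cs j" for j w
  proof -
    have r1: "reach X {..<n} (v j) w" using w reach_up[OF _ j(1)] unfolding Cs_def comp_def by auto
    have "reach X {..<n} v0 (v j)"
    proof (cases "j = i0")
      case True
      then show ?thesis unfolding v0_def by (simp add: reach_refl)
    next
      case False
      then obtain u w' where uw: "u \<in> Cs i0" "w' \<in> Cs j" "reach X {..<n} u w'"
        using link[OF i0(1) j(1) _ i0(2) j(2)] by metis
      have "reach X {..<n} v0 u" using uw(1) reach_up[OF _ i0(1)] unfolding Cs_def comp_def v0_def by auto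
      moreover have "reach X {..<n} w' (v j)" using uw(2) reach_up[OF _ j(1)] reach_sym unfolding Cs_def comp_def by blast
      ultimately show ?thesis using uw(3) reach_trans by blast
    qed
    then show ?thesis using r1 reach_trans by blast
  qed
  have CsC: "Cs j \<subseteq> C" if "j \<in> {1,2,3}" "big j" for j
    using reach_v0[OF that] Cs_sub Vsub[OF that(1)] unfolding C_def comp_def by blast
  have Cn: "C \<subseteq> {..<n}" unfolding C_def comp_def by auto
  have cardC: "card C = card (C \<inter> V 1) + card (C \<inter> V 2) + card (C \<inter> V 3)"
  proof -
    have "C = (C \<inter> V 1) \<union> (C \<inter> V 2) \<union> (C \<inter> V 3)" using Cn part by auto
    moreover have f: "finite (C \<inter> V 1)" "finite (C \<inter> V 2)" "finite (C \<inter> V 3)" using finV by auto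
    moreover have "(C \<inter> V 1) \<inter> (C \<inter> V 2) = {}" "((C \<inter> V 1) \<union> (C \<inter> V 2)) \<inter> (C \<inter> V 3) = {}"
      using part by auto
    ultimately show ?thesis by (metis card_Un_disjoint finite_UnI)
  qed
  define dd where "dd i = (if big i then 0 else \<delta> * real n)" for i
  have per: "real (card (C \<inter> V i)) \<ge> (th - \<delta>) * real (card (V i)) - dd i" if i: "i \<in> {1,2,3}" for i
  proof (cases "big i")
    case True
    have "Cs i \<subseteq> C \<inter> V i" using CsC[OF i True] Cs_sub by auto
    then have "card (Cs i) \<le> card (C \<inter> V i)" using finV[OF i] by (intro card_mono) auto
    then show ?thesis using v[OF i True] True unfolding dd_def th_def Cs_def by auto
  next
    case False
    have "(th - \<delta>) * real (card (V i)) \<le> 1 * real (card (V i))"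
      unfolding th_def using s d by (intro mult_right_mono) (auto simp: field_simps)
    then show ?thesis using False unfolding dd_def big_def by auto
  qed
  have "dd 1 + dd 2 + dd 3 \<le> 2 * (\<delta> * real n)" using i0 d n unfolding dd_def by auto
  moreover have "real (card C) = real (card (C \<inter> V 1)) + real (card (C \<inter> V 2)) + real (card (C \<inter> V 3))"
    using cardC by simp
  moreover have "(th - \<delta>) * real (card (V 1)) + (th - \<delta>) * real (card (V 2)) + (th - \<delta>) * real (card (V 3)) = (th - \<delta>) * real n"
    using sumV by (simp flip: distrib_left of_nat_add)
  ultimately have "real (card C) \<ge> (th - \<delta>) * real n - 2 * (\<delta> * real n)"
    using per[of 1] per[of 2] per[of 3] by simp
  then have cC: "real (card C) \<ge> (th - 3 * \<delta>) * real n" by (simp add: algebra_simps)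
  have "(th - 3 * \<delta>) * real n > real n / 2" using d n unfolding th_def by (simp add: algebra_simps)
  then have "2 * card C > card {..<n}" using cC by simp
  then have ulcC: "unique_largest_comp X {..<n} C" unfolding C_def
    using ulc[of v0 "{..<n}"] v0 Vsub[OF i0(1)] by auto
  have G3: "\<forall>i\<in>{1,2,3}. \<delta> * real n \<le> real (card (V i)) \<longrightarrow>
      unique_largest_comp X (V i) (Cs i) \<and> ((1 + s) / 2 - \<delta>) * real (card (V i)) \<le> real (card (Cs i))"
  proof (intro ballI impI)
    fix i assume "i \<in> {1::nat,2,3}" "\<delta> * real n \<le> real (card (V i))"
    then show "unique_largest_comp X (V i) (Cs i) \<and> ((1 + s) / 2 - \<delta>) * real (card (V i)) \<le> real (card (Cs i))"
      using v[of i] unfolding Cs_def big_def by blast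
  qed
  have G4: "\<forall>i\<in>{1,2,3}. \<forall>j\<in>{1,2,3}. i < j \<longrightarrow> \<delta> * real n \<le> real (card (V i)) \<longrightarrow> \<delta> * real n \<le> real (card (V j)) \<longrightarrow>
      (\<exists>u\<in>Cs i. \<exists>w\<in>Cs j. reach (bip_edges X (V i) (V j)) (V i \<union> V j) u w)"
  proof (intro ballI impI)
    fix i j assume "i \<in> {1::nat,2,3}" "j \<in> {1::nat,2,3}" "i < j" "\<delta> * real n \<le> real (card (V i))" "\<delta> * real n \<le> real (card (V j))"
    then show "\<exists>u\<in>Cs i. \<exists>w\<in>Cs j. reach (bip_edges X (V i) (V j)) (V i \<union> V j) u w"
      using p4[of i j] unfolding big_def by blast
  qed
  have G5: "\<exists>C. unique_largest_comp X {..<n} C \<and> ((1 + s) / 2 - 3 * \<delta>) * real n \<le> real (card C) \<and>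
      (\<forall>i\<in>{1,2,3}. \<delta> * real n \<le> real (card (V i)) \<longrightarrow> Cs i \<subseteq> C)"
  proof (intro exI conjI)
    show "unique_largest_comp X {..<n} C" by (rule ulcC)
    show "((1 + s) / 2 - 3 * \<delta>) * real n \<le> real (card C)" using cC unfolding th_def .
    show "\<forall>i\<in>{1,2,3}. \<delta> * real n \<le> real (card (V i)) \<longrightarrow> Cs i \<subseteq> C"
      using CsC unfolding big_def by blast
  qed
  show ?thesis
    unfolding Let_def sdef dpow
    apply (intro conjI)
      apply (rule P1)
     apply (rule P2)
    apply (rule exI[of _ Cs])
    apply (intro conjI)
      apply (rule G3)
     apply (rule G4)
    apply (rule G5)
    done
qed


lemma un_le: "measure_pmf.prob \<mu> (A \<union> B) \<le> measure_pmf.prob \<mu> A + measure_pmf.prob \<mu> B"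
  by (rule measure_Un_le) auto

lemma prob_n:
  fixes p \<epsilon> q \<delta> s :: real and n :: nat and V :: "nat \<Rightarrow> nat set" and E :: "nat set set" and \<mu> :: "nat set set pmf"
  assumes n: "n > 0" and q: "q > 0" and EE: "E \<subseteq> edges_on {..<n}"
    and quasi: "\<forall>U \<subseteq> {..<n}. \<bar>real (e_ind E U) - q * real (card U)^2 / 2\<bar> \<le> \<epsilon>^2 / 4 * q * real n^2"
    and part: "V 1 \<union> V 2 \<union> V 3 = {..<n} \<and> V 1 \<inter> V 2 = {} \<and> V 1 \<inter> V 3 = {} \<and> V 2 \<inter> V 3 = {}"
    and mu: "\<mu> \<in> M1p E p" and p: "1/2 < p" "p \<le> 1" and eps: "0 < \<epsilon>" "\<epsilon> \<le> 1"
    and dpow: "\<epsilon> powr (1/4) = \<delta>" and d4: "\<delta>^4 = \<epsilon>" and d: "\<delta> > 0" "100 * \<delta> \<le> s" "\<delta> \<le> 1"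
    and sdef: "sqrt (2*p - 1) = s" and s: "s^2 = 2*p - 1" "s \<ge> 0" "s \<le> 1"
  shows "measure_pmf.prob \<mu> {X. let \<theta> = (1 + sqrt (2*p - 1)) / 2; big = (\<lambda>i. real (card (V i)) \<ge> \<epsilon> powr (1/4) * real n) in
          (\<forall>i\<in>{1,2,3}. real (e_ind X (V i)) \<ge> p * q * real (card (V i))^2 / 2 - \<epsilon> * q * real n^2) \<and>
          (\<forall>i\<in>{1,2,3}. \<forall>j\<in>{1,2,3}. i < j \<longrightarrow>
             real (e_bip X (V i) (V j)) \<ge> p * q * real (card (V i)) * real (card (V j)) - \<epsilon> * q * real n^2) \<and>
          (\<exists>Cs :: nat \<Rightarrow> nat set.
             (\<forall>i\<in>{1,2,3}. big i \<longrightarrow>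
                unique_largest_comp X (V i) (Cs i) \<and>
                real (card (Cs i)) \<ge> (\<theta> - \<epsilon> powr (1/4)) * real (card (V i))) \<and>
             (\<forall>i\<in>{1,2,3}. \<forall>j\<in>{1,2,3}. i < j \<longrightarrow> big i \<longrightarrow> big j \<longrightarrow>
                (\<exists>u\<in>Cs i. \<exists>w\<in>Cs j. reach (bip_edges X (V i) (V j)) (V i \<union> V j) u w)) \<and>
             (\<exists>C. unique_largest_comp X {..<n} C \<and>
                  real (card C) \<ge> (\<theta> - 3 * \<epsilon> powr (1/4)) * real n \<and>
                  (\<forall>i\<in>{1,2,3}. big i \<longrightarrow> Cs i \<subseteq> C)))} \<ge> 1 - 120 / (\<epsilon>^2 * q * real n)"
proof -
  define P1 where "P1 i = {X. \<not> (real (e_ind X (V i)) \<ge> p * q * real (card (V i))^2 / 2 - \<epsilon> * q * real n^2)}" for i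
  define P2 where "P2 i j = {X. \<not> (real (e_bip X (V i) (V j)) \<ge> p * q * real (card (V i)) * real (card (V j)) - \<epsilon> * q * real n^2)}" for i j
  define Bad where "Bad = P1 1 \<union> P1 2 \<union> P1 3 \<union> P2 1 2 \<union> P2 1 3 \<union> P2 2 3"
  have sup: "set_pmf \<mu> \<subseteq> Pow E" using mu unfolding M1p_def by auto
  have Vsub: "V i \<subseteq> {..<n}" if "i \<in> {1,2,3}" for i using part that by auto
  have b1: "measure_pmf.prob \<mu> (P1 i) \<le> 8 / (\<epsilon>^2 * q * real n)" if "i \<in> {1,2,3}" for i
    unfolding P1_def by (rule p1_prob[OF EE quasi mu p eps q n Vsub[OF that]])
  have b2: "measure_pmf.prob \<mu> (P2 i j) \<le> 32 / (\<epsilon>^2 * q * real n)" if "i \<in> {1,2,3}" "j \<in> {1,2,3}" "V i \<inter> V j = {}" for i j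
    unfolding P2_def by (rule p2_prob[OF EE quasi mu p eps q n Vsub[OF that(1)] Vsub[OF that(2)] that(3)])
  have "measure_pmf.prob \<mu> Bad \<le> measure_pmf.prob \<mu> (P1 1) + measure_pmf.prob \<mu> (P1 2) + measure_pmf.prob \<mu> (P1 3)
      + measure_pmf.prob \<mu> (P2 1 2) + measure_pmf.prob \<mu> (P2 1 3) + measure_pmf.prob \<mu> (P2 2 3)"
    unfolding Bad_def using un_le[of \<mu>] by (meson add_mono order_refl order_trans)
  also have "\<dots> \<le> 3 * (8 / (\<epsilon>^2 * q * real n)) + 3 * (32 / (\<epsilon>^2 * q * real n))"
  proof -
    have dj: "V 1 \<inter> V 2 = {}" "V 1 \<inter> V 3 = {}" "V 2 \<inter> V 3 = {}" using part by auto
    have "measure_pmf.prob \<mu> (P1 1) \<le> 8 / (\<epsilon>^2 * q * real n)" "measure_pmf.prob \<mu> (P1 2) \<le> 8 / (\<epsilon>^2 * q * real n)"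
      "measure_pmf.prob \<mu> (P1 3) \<le> 8 / (\<epsilon>^2 * q * real n)" using b1 by auto
    moreover have "measure_pmf.prob \<mu> (P2 1 2) \<le> 32 / (\<epsilon>^2 * q * real n)" "measure_pmf.prob \<mu> (P2 1 3) \<le> 32 / (\<epsilon>^2 * q * real n)"
      "measure_pmf.prob \<mu> (P2 2 3) \<le> 32 / (\<epsilon>^2 * q * real n)" using b2 dj by auto
    ultimately show ?thesis by linarith
  qed
  also have "\<dots> = 120 / (\<epsilon>^2 * q * real n)" by simp
  finally have bad: "measure_pmf.prob \<mu> Bad \<le> 120 / (\<epsilon>^2 * q * real n)" .
  have "measure_pmf.prob \<mu> (UNIV - Bad) \<le> measure_pmf.prob \<mu> {X. let \<theta> = (1 + sqrt (2*p - 1)) / 2; big = (\<lambda>i. real (card (V i)) \<ge> \<epsilon> powr (1/4) * real n) in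
          (\<forall>i\<in>{1,2,3}. real (e_ind X (V i)) \<ge> p * q * real (card (V i))^2 / 2 - \<epsilon> * q * real n^2) \<and>
          (\<forall>i\<in>{1,2,3}. \<forall>j\<in>{1,2,3}. i < j \<longrightarrow>
             real (e_bip X (V i) (V j)) \<ge> p * q * real (card (V i)) * real (card (V j)) - \<epsilon> * q * real n^2) \<and>
          (\<exists>Cs :: nat \<Rightarrow> nat set.
             (\<forall>i\<in>{1,2,3}. big i \<longrightarrow>
                unique_largest_comp X (V i) (Cs i) \<and>
                real (card (Cs i)) \<ge> (\<theta> - \<epsilon> powr (1/4)) * real (card (V i))) \<and>
             (\<forall>i\<in>{1,2,3}. \<forall>j\<in>{1,2,3}. i < j \<longrightarrow> big i \<longrightarrow> big j \<longrightarrow>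
                (\<exists>u\<in>Cs i. \<exists>w\<in>Cs j. reach (bip_edges X (V i) (V j)) (V i \<union> V j) u w)) \<and>
             (\<exists>C. unique_largest_comp X {..<n} C \<and>
                  real (card C) \<ge> (\<theta> - 3 * \<epsilon> powr (1/4)) * real n \<and>
                  (\<forall>i\<in>{1,2,3}. big i \<longrightarrow> Cs i \<subseteq> C)))}"
  proof (rule prob_mono_supp)
    fix X assume X: "X \<in> set_pmf \<mu>" "X \<in> UNIV - Bad"
    have XE: "X \<subseteq> E" using X sup by auto
    have "X \<notin> P1 1" "X \<notin> P1 2" "X \<notin> P1 3" "X \<notin> P2 1 2" "X \<notin> P2 1 3" "X \<notin> P2 2 3"
      using X unfolding Bad_def by auto
    then have H1: "\<forall>i\<in>{1,2,3}. real (e_ind X (V i)) \<ge> p * q * real (card (V i))^2 / 2 - \<epsilon> * q * real n^2"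
      and H2: "\<forall>i\<in>{1,2,3}. \<forall>j\<in>{1,2,3}. i < j \<longrightarrow>
             real (e_bip X (V i) (V j)) \<ge> p * q * real (card (V i)) * real (card (V j)) - \<epsilon> * q * real n^2"
      unfolding P1_def P2_def by auto
    show "X \<in> {X. let \<theta> = (1 + sqrt (2*p - 1)) / 2; big = (\<lambda>i. real (card (V i)) \<ge> \<epsilon> powr (1/4) * real n) in
          (\<forall>i\<in>{1,2,3}. real (e_ind X (V i)) \<ge> p * q * real (card (V i))^2 / 2 - \<epsilon> * q * real n^2) \<and>
          (\<forall>i\<in>{1,2,3}. \<forall>j\<in>{1,2,3}. i < j \<longrightarrow>
             real (e_bip X (V i) (V j)) \<ge> p * q * real (card (V i)) * real (card (V j)) - \<epsilon> * q * real n^2) \<and>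
          (\<exists>Cs :: nat \<Rightarrow> nat set.
             (\<forall>i\<in>{1,2,3}. big i \<longrightarrow>
                unique_largest_comp X (V i) (Cs i) \<and>
                real (card (Cs i)) \<ge> (\<theta> - \<epsilon> powr (1/4)) * real (card (V i))) \<and>
             (\<forall>i\<in>{1,2,3}. \<forall>j\<in>{1,2,3}. i < j \<longrightarrow> big i \<longrightarrow> big j \<longrightarrow>
                (\<exists>u\<in>Cs i. \<exists>w\<in>Cs j. reach (bip_edges X (V i) (V j)) (V i \<union> V j) u w)) \<and>
             (\<exists>C. unique_largest_comp X {..<n} C \<and>
                  real (card C) \<ge> (\<theta> - 3 * \<epsilon> powr (1/4)) * real n \<and>
                  (\<forall>i\<in>{1,2,3}. big i \<longrightarrow> Cs i \<subseteq> C)))}"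
      using main_det[OF n q EE quasi part XE dpow d4 d sdef s H1 H2] by simp
  qed
  moreover have "measure_pmf.prob \<mu> (UNIV - Bad) = 1 - measure_pmf.prob \<mu> Bad"
    using measure_pmf.prob_compl[of Bad \<mu>] by simp
  ultimately show ?thesis using bad by linarith
qed


theorem lemma23:
  fixes p :: real
  assumes "1/2 < p" and "p \<le> 1"
  shows "\<exists>\<epsilon>0>0. \<forall>\<epsilon>::real. 0 < \<epsilon> \<and> \<epsilon> < \<epsilon>0 \<longrightarrow>
    (\<forall>(q :: nat \<Rightarrow> real) (E :: nat \<Rightarrow> nat set set) (V :: nat \<Rightarrow> nat \<Rightarrow> nat set)
       (\<mu> :: nat \<Rightarrow> nat set set pmf).
      (\<lambda>n. ln (real n) / real n) \<in> o(q) \<longrightarrow>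
      (\<forall>n. E n \<subseteq> edges_on {..<n} \<and>
           (\<forall>U \<subseteq> {..<n}. \<bar>real (e_ind (E n) U) - q n * real (card U)^2 / 2\<bar>
                              \<le> \<epsilon>^2 / 4 * q n * real n^2)) \<longrightarrow>
      (\<forall>n. V n 1 \<union> V n 2 \<union> V n 3 = {..<n} \<and>
           V n 1 \<inter> V n 2 = {} \<and> V n 1 \<inter> V n 3 = {} \<and> V n 2 \<inter> V n 3 = {}) \<longrightarrow>
      (\<forall>n. \<mu> n \<in> M1p (E n) p) \<longrightarrow>
      ((\<lambda>n. measure_pmf.prob (\<mu> n) {X.
          let \<theta> = (1 + sqrt (2*p - 1)) / 2; big = (\<lambda>i. real (card (V n i)) \<ge> \<epsilon> powr (1/4) * real n) in
          \<comment> \<open>(P1)\<close>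
          (\<forall>i\<in>{1,2,3}. real (e_ind X (V n i)) \<ge> p * q n * real (card (V n i))^2 / 2 - \<epsilon> * q n * real n^2) \<and>
          \<comment> \<open>(P2)\<close>
          (\<forall>i\<in>{1,2,3}. \<forall>j\<in>{1,2,3}. i < j \<longrightarrow>
             real (e_bip X (V n i) (V n j)) \<ge> p * q n * real (card (V n i)) * real (card (V n j)) - \<epsilon> * q n * real n^2) \<and>
          (\<exists>Cs :: nat \<Rightarrow> nat set.
             \<comment> \<open>(P3)\<close>
             (\<forall>i\<in>{1,2,3}. big i \<longrightarrow>
                unique_largest_comp X (V n i) (Cs i) \<and>
                real (card (Cs i)) \<ge> (\<theta> - \<epsilon> powr (1/4)) * real (card (V n i))) \<and>
             \<comment> \<open>(P4)\<close>
             (\<forall>i\<in>{1,2,3}. \<forall>j\<in>{1,2,3}. i < j \<longrightarrow> big i \<longrightarrow> big j \<longrightarrow>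
                (\<exists>u\<in>Cs i. \<exists>w\<in>Cs j. reach (bip_edges X (V n i) (V n j)) (V n i \<union> V n j) u w)) \<and>
             \<comment> \<open>(P5)\<close>
             (\<exists>C. unique_largest_comp X {..<n} C \<and>
                  real (card C) \<ge> (\<theta> - 3 * \<epsilon> powr (1/4)) * real n \<and>
                  (\<forall>i\<in>{1,2,3}. big i \<longrightarrow> Cs i \<subseteq> C)))})
        \<longlonglongrightarrow> 1))"
proof -
  define s where "s = sqrt (2*p - 1)"
  have s0: "s > 0" unfolding s_def using assms by simp
  have s2: "s^2 = 2*p - 1" unfolding s_def using assms by simp
  have s1: "s \<le> 1" unfolding s_def using assms by simp
  define e0 where "e0 = (s/100)^4"
  have e0: "e0 > 0" unfolding e0_def using s0 by simp
  have e0pow: "e0 powr (1/4) = s/100"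
  proof -
    have h: "(s/100) powr (real (4::nat)) = (s/100)^4" using s0 by (intro powr_realpow) simp
    then have "e0 = (s/100) powr 4" unfolding e0_def by simp
    then have "e0 powr (1/4) = (s/100) powr (4 * (1/4))" by (simp add: powr_powr)
    then show ?thesis using s0 by simp
  qed
  show ?thesis
  proof (rule exI[of _ e0], intro conjI allI impI)
    show "e0 > 0" by (rule e0)
    fix \<epsilon> :: real and q :: "nat \<Rightarrow> real" and E :: "nat \<Rightarrow> nat set set" and V :: "nat \<Rightarrow> nat \<Rightarrow> nat set"
      and \<mu> :: "nat \<Rightarrow> nat set set pmf"
    assume eps: "0 < \<epsilon> \<and> \<epsilon> < e0"
      and lo: "(\<lambda>n. ln (real n) / real n) \<in> o(q)"
      and H: "\<forall>n. E n \<subseteq> edges_on {..<n} \<and>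
           (\<forall>U \<subseteq> {..<n}. \<bar>real (e_ind (E n) U) - q n * real (card U)^2 / 2\<bar>
                              \<le> \<epsilon>^2 / 4 * q n * real n^2)"
      and part: "\<forall>n. V n 1 \<union> V n 2 \<union> V n 3 = {..<n} \<and>
           V n 1 \<inter> V n 2 = {} \<and> V n 1 \<inter> V n 3 = {} \<and> V n 2 \<inter> V n 3 = {}"
      and mu: "\<forall>n. \<mu> n \<in> M1p (E n) p"
    define \<delta> where "\<delta> = \<epsilon> powr (1/4)"
    have d0: "\<delta> > 0" unfolding \<delta>_def using eps by simp
    have d4: "\<delta>^4 = \<epsilon>"
    proof -
      have h: "\<delta> powr (real (4::nat)) = \<delta>^4" using d0 by (intro powr_realpow) simp
      have "\<delta>^4 = \<delta> powr 4" using h by simp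
      also have "\<dots> = \<epsilon> powr (1/4 * 4)" unfolding \<delta>_def by (simp add: powr_powr)
      finally show ?thesis using eps by simp
    qed
    have "\<delta> < s/100" unfolding \<delta>_def e0pow[symmetric] using eps by (intro powr_less_mono2) auto
    then have d100: "100 * \<delta> \<le> s" by simp
    have d1: "\<delta> \<le> 1" using d100 s1 d0 by simp
    have eps1: "\<epsilon> \<le> 1" using d4 d1 d0 by (metis power_le_one less_imp_le)
    have qnn: "q n \<ge> 0" if "n \<ge> 1" for n
    proof (rule ccontr)
      assume neg: "\<not> q n \<ge> 0"
      have "{0} \<subseteq> {..<n}" using that by auto
      have Hn: "E n \<subseteq> edges_on {..<n}" "\<forall>U \<subseteq> {..<n}. \<bar>real (e_ind (E n) U) - q n * real (card U)^2 / 2\<bar>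
                              \<le> \<epsilon>^2 / 4 * q n * real n^2" using spec[OF H, of n] by auto
      have h: "\<bar>real (e_ind (E n) {0}) - q n * real (card {0::nat})^2 / 2\<bar> \<le> \<epsilon>^2 / 4 * q n * real n^2"
        using Hn(2) \<open>{0} \<subseteq> {..<n}\<close> by blast
      have "e_ind (E n) {0} = 0"
      proof -
        have "{e \<in> E n. e \<subseteq> {0}} = {}"
        proof (rule ccontr)
          assume "{e \<in> E n. e \<subseteq> {0}} \<noteq> {}"
          then obtain e where "e \<in> E n" "e \<subseteq> {0}" by auto
          then have "e \<in> edges_on {..<n}" using Hn(1) by auto
          then obtain u v where "e = {u, v}" "u \<noteq> v" unfolding edges_on_def by auto
          then show False using \<open>e \<subseteq> {0}\<close> by auto
        qed
        then show ?thesis unfolding e_ind_def by simp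
      qed
      then have "\<bar>0 - q n * 1 / 2\<bar> \<le> \<epsilon>^2 / 4 * q n * real n^2" using h by simp
      moreover have "\<epsilon>^2 / 4 * q n \<le> 0" using neg by (intro mult_nonneg_nonpos) auto
      then have "\<epsilon>^2 / 4 * q n * real n^2 \<le> 0" by (rule mult_nonpos_nonneg) simp
      ultimately show False using neg by linarith
    qed
    have ev1: "eventually (\<lambda>n. norm (ln (real n) / real n) \<le> 1 * norm (q n)) sequentially"
      using landau_o.smallD[OF lo, of 1] by simp
    have ev: "eventually (\<lambda>n. 1 - 120 / (\<epsilon>^2 * ln (real n)) \<le> measure_pmf.prob (\<mu> n) {X.
          let \<theta> = (1 + sqrt (2*p - 1)) / 2; big = (\<lambda>i. real (card (V n i)) \<ge> \<epsilon> powr (1/4) * real n) in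
          \<comment> \<open>(P1)\<close>
          (\<forall>i\<in>{1,2,3}. real (e_ind X (V n i)) \<ge> p * q n * real (card (V n i))^2 / 2 - \<epsilon> * q n * real n^2) \<and>
          \<comment> \<open>(P2)\<close>
          (\<forall>i\<in>{1,2,3}. \<forall>j\<in>{1,2,3}. i < j \<longrightarrow>
             real (e_bip X (V n i) (V n j)) \<ge> p * q n * real (card (V n i)) * real (card (V n j)) - \<epsilon> * q n * real n^2) \<and>
          (\<exists>Cs :: nat \<Rightarrow> nat set.
             \<comment> \<open>(P3)\<close>
             (\<forall>i\<in>{1,2,3}. big i \<longrightarrow>
                unique_largest_comp X (V n i) (Cs i) \<and>
                real (card (Cs i)) \<ge> (\<theta> - \<epsilon> powr (1/4)) * real (card (V n i))) \<and>
             \<comment> \<open>(P4)\<close>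
             (\<forall>i\<in>{1,2,3}. \<forall>j\<in>{1,2,3}. i < j \<longrightarrow> big i \<longrightarrow> big j \<longrightarrow>
                (\<exists>u\<in>Cs i. \<exists>w\<in>Cs j. reach (bip_edges X (V n i) (V n j)) (V n i \<union> V n j) u w)) \<and>
             \<comment> \<open>(P5)\<close>
             (\<exists>C. unique_largest_comp X {..<n} C \<and>
                  real (card C) \<ge> (\<theta> - 3 * \<epsilon> powr (1/4)) * real n \<and>
                  (\<forall>i\<in>{1,2,3}. big i \<longrightarrow> Cs i \<subseteq> C)))}) sequentially"
      using ev1 eventually_ge_at_top[of 2]
    proof eventually_elim
      case (elim n)
      have n2: "n \<ge> 2" using elim by simp
      have ln0: "ln (real n) > 0" using n2 by simp
      have "ln (real n) / real n \<le> q n" using elim qnn[of n] n2 by simp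
      then have lnq: "ln (real n) \<le> q n * real n" using n2 by (simp add: divide_le_eq)
      then have qpos: "q n > 0" using ln0 n2 by (smt (verit) mult_nonpos_nonneg of_nat_0_le_iff)
      have pb: "measure_pmf.prob (\<mu> n) {X.
          let \<theta> = (1 + sqrt (2*p - 1)) / 2; big = (\<lambda>i. real (card (V n i)) \<ge> \<epsilon> powr (1/4) * real n) in
          \<comment> \<open>(P1)\<close>
          (\<forall>i\<in>{1,2,3}. real (e_ind X (V n i)) \<ge> p * q n * real (card (V n i))^2 / 2 - \<epsilon> * q n * real n^2) \<and>
          \<comment> \<open>(P2)\<close>
          (\<forall>i\<in>{1,2,3}. \<forall>j\<in>{1,2,3}. i < j \<longrightarrow>
             real (e_bip X (V n i) (V n j)) \<ge> p * q n * real (card (V n i)) * real (card (V n j)) - \<epsilon> * q n * real n^2) \<and>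
          (\<exists>Cs :: nat \<Rightarrow> nat set.
             \<comment> \<open>(P3)\<close>
             (\<forall>i\<in>{1,2,3}. big i \<longrightarrow>
                unique_largest_comp X (V n i) (Cs i) \<and>
                real (card (Cs i)) \<ge> (\<theta> - \<epsilon> powr (1/4)) * real (card (V n i))) \<and>
             \<comment> \<open>(P4)\<close>
             (\<forall>i\<in>{1,2,3}. \<forall>j\<in>{1,2,3}. i < j \<longrightarrow> big i \<longrightarrow> big j \<longrightarrow>
                (\<exists>u\<in>Cs i. \<exists>w\<in>Cs j. reach (bip_edges X (V n i) (V n j)) (V n i \<union> V n j) u w)) \<and>
             \<comment> \<open>(P5)\<close>
             (\<exists>C. unique_largest_comp X {..<n} C \<and>
                  real (card C) \<ge> (\<theta> - 3 * \<epsilon> powr (1/4)) * real n \<and>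
                  (\<forall>i\<in>{1,2,3}. big i \<longrightarrow> Cs i \<subseteq> C)))} \<ge> 1 - 120 / (\<epsilon>^2 * q n * real n)"
      proof (rule prob_n[where V="V n" and q="q n" and E="E n" and \<mu>="\<mu> n" and n=n and \<epsilon>=\<epsilon> and \<delta>=\<delta> and s=s and p=p])
        show "n > 0" using n2 by simp
        show "q n > 0" by (rule qpos)
        show "E n \<subseteq> edges_on {..<n}" using spec[OF H, of n] by (rule conjunct1)
        show "\<forall>U \<subseteq> {..<n}. \<bar>real (e_ind (E n) U) - q n * real (card U)^2 / 2\<bar> \<le> \<epsilon>^2 / 4 * q n * real n^2"
          using spec[OF H, of n] by (rule conjunct2)
        show "V n 1 \<union> V n 2 \<union> V n 3 = {..<n} \<and> V n 1 \<inter> V n 2 = {} \<and> V n 1 \<inter> V n 3 = {} \<and> V n 2 \<inter> V n 3 = {}"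
          using spec[OF part, of n] .
        show "\<mu> n \<in> M1p (E n) p" using spec[OF mu, of n] .
        show "1/2 < p" "p \<le> 1" using assms by auto
        show "0 < \<epsilon>" using eps by simp
        show "\<epsilon> \<le> 1" by (rule eps1)
        show "\<epsilon> powr (1/4) = \<delta>" unfolding \<delta>_def ..
        show "\<delta>^4 = \<epsilon>" by (rule d4)
        show "\<delta> > 0" "100 * \<delta> \<le> s" "\<delta> \<le> 1" by (rule d0, rule d100, rule d1)
        show "sqrt (2*p - 1) = s" unfolding s_def ..
        show "s^2 = 2*p - 1" "s \<ge> 0" "s \<le> 1" using s2 s0 s1 by auto
      qed
      have "\<epsilon>^2 * ln (real n) \<le> \<epsilon>^2 * (q n * real n)" using lnq by (intro mult_left_mono) auto
      then have "120 / (\<epsilon>^2 * (q n * real n)) \<le> 120 / (\<epsilon>^2 * ln (real n))"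
        using ln0 eps by (intro divide_left_mono) auto
      then show ?case using pb by (simp add: mult.assoc)
    qed
    have lim0: "(\<lambda>n. 120 / (\<epsilon>^2 * ln (real n))) \<longlonglongrightarrow> 0"
    proof (rule tendsto_divide_0[OF tendsto_const])
      have "filterlim (\<lambda>n. ln (real n)) at_top sequentially"
        by (rule filterlim_compose[OF ln_at_top filterlim_real_sequentially])
      then have "filterlim (\<lambda>n. \<epsilon>^2 * ln (real n)) at_top sequentially"
        using eps by (intro filterlim_tendsto_pos_mult_at_top[OF tendsto_const]) auto
      then show "filterlim (\<lambda>n. \<epsilon>^2 * ln (real n)) at_infinity sequentially"
        by (rule filterlim_at_top_imp_at_infinity)
    qed
    have low: "(\<lambda>n. 1 - 120 / (\<epsilon>^2 * ln (real n))) \<longlonglongrightarrow> 1"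
      using tendsto_diff[OF tendsto_const lim0, of 1] by simp
    show "(\<lambda>n. measure_pmf.prob (\<mu> n) {X.
          let \<theta> = (1 + sqrt (2*p - 1)) / 2; big = (\<lambda>i. real (card (V n i)) \<ge> \<epsilon> powr (1/4) * real n) in
          \<comment> \<open>(P1)\<close>
          (\<forall>i\<in>{1,2,3}. real (e_ind X (V n i)) \<ge> p * q n * real (card (V n i))^2 / 2 - \<epsilon> * q n * real n^2) \<and>
          \<comment> \<open>(P2)\<close>
          (\<forall>i\<in>{1,2,3}. \<forall>j\<in>{1,2,3}. i < j \<longrightarrow>
             real (e_bip X (V n i) (V n j)) \<ge> p * q n * real (card (V n i)) * real (card (V n j)) - \<epsilon> * q n * real n^2) \<and>
          (\<exists>Cs :: nat \<Rightarrow> nat set.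
             \<comment> \<open>(P3)\<close>
             (\<forall>i\<in>{1,2,3}. big i \<longrightarrow>
                unique_largest_comp X (V n i) (Cs i) \<and>
                real (card (Cs i)) \<ge> (\<theta> - \<epsilon> powr (1/4)) * real (card (V n i))) \<and>
             \<comment> \<open>(P4)\<close>
             (\<forall>i\<in>{1,2,3}. \<forall>j\<in>{1,2,3}. i < j \<longrightarrow> big i \<longrightarrow> big j \<longrightarrow>
                (\<exists>u\<in>Cs i. \<exists>w\<in>Cs j. reach (bip_edges X (V n i) (V n j)) (V n i \<union> V n j) u w)) \<and>
             \<comment> \<open>(P5)\<close>
             (\<exists>C. unique_largest_comp X {..<n} C \<and>
                  real (card C) \<ge> (\<theta> - 3 * \<epsilon> powr (1/4)) * real n \<and>
                  (\<forall>i\<in>{1,2,3}. big i \<longrightarrow> Cs i \<subseteq> C)))}) \<longlonglongrightarrow> 1"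
      by (rule tendsto_sandwich[OF ev _ low tendsto_const]) (simp add: measure_pmf.prob_le_1)
  qed
qed

end
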